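(* The equational theory of $\mathbf{W}$ is decidable if, and only if, there exists an algorithm that decides, for any basic terms $t_1,\dots,t_n$, whether $\mathbf{W}\models 1\le t_1\vee\cdots\vee t_n$.
   Context: Let $\omega^+=\omega\cup\{\omega\}$. A time warp is a join-preserving map $\omega^+\to\omega^+$; $W$ is the set of time warps ordered pointwise; $p(m)=\bigvee\{k\in\omega\mid k<m\}$; $f\backslash g$ is the largest time warp $h$ with $f\circ h\le g$. $\mathbf{W}=\langle W,\wedge,\vee,\circ,{}^\star,\mathrm{id}\rangle$ with pointwise meet/join, composition, $f^\star:=f\backslash p$, identity. Terms are built from a countably infinite set of variables using $\wedge,\vee,\cdot,{}',1$, interpreted as $\wedge,\vee,\circ,{}^\star,\mathrm{id}$. A basic term is one built from variables using only $\cdot$, ${}'$, $1$. $\mathbf{W}\models s\le t$ means the value of $s$ is pointwise below that of $t$ under every assignment of time warps to the variables. *)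

theory Defs
  imports Main "HOL-Library.Extended_Nat" "HOL-Library.Nat_Bijection"
begin

text \<open>omega^+ = omega \<union> {omega} is rendered as the complete lattice enat,
  with \<infinity> playing the role of omega.\<close>

definition time_warp :: "(enat \<Rightarrow> enat) \<Rightarrow> bool" where
  "time_warp f \<longleftrightarrow> (\<forall>X :: enat set. f (Sup X) = Sup (f ` X))"

definition pw :: "enat \<Rightarrow> enat" where
  "pw m = Sup {of_nat k | k :: nat. of_nat k < m}"

definition tw_res :: "(enat \<Rightarrow> enat) \<Rightarrow> (enat \<Rightarrow> enat) \<Rightarrow> (enat \<Rightarrow> enat)" where
  "tw_res f g = (GREATEST h. time_warp h \<and> f \<circ> h \<le> g)"

definition tw_star :: "(enat \<Rightarrow> enat) \<Rightarrow> (enat \<Rightarrow> enat)" where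
  "tw_star f = tw_res f pw"

datatype trm = Var nat | Meet trm trm | Join trm trm | Dot trm trm | Prime trm | One

primrec eval :: "(nat \<Rightarrow> enat \<Rightarrow> enat) \<Rightarrow> trm \<Rightarrow> enat \<Rightarrow> enat" where
  "eval \<sigma> (Var i) = \<sigma> i"
| "eval \<sigma> (Meet s t) = inf (eval \<sigma> s) (eval \<sigma> t)"
| "eval \<sigma> (Join s t) = sup (eval \<sigma> s) (eval \<sigma> t)"
| "eval \<sigma> (Dot s t) = eval \<sigma> s \<circ> eval \<sigma> t"
| "eval \<sigma> (Prime s) = tw_star (eval \<sigma> s)"
| "eval \<sigma> One = id"

inductive basic :: "trm \<Rightarrow> bool" where
  "basic (Var i)"
| "basic s \<Longrightarrow> basic t \<Longrightarrow> basic (Dot s t)"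
| "basic s \<Longrightarrow> basic (Prime s)"
| "basic One"

definition W_leq :: "trm \<Rightarrow> trm \<Rightarrow> bool" where
  "W_leq s t \<longleftrightarrow> (\<forall>\<sigma>. (\<forall>i. time_warp (\<sigma> i)) \<longrightarrow> (\<forall>x. eval \<sigma> s x \<le> eval \<sigma> t x))"

definition W_eq :: "trm \<Rightarrow> trm \<Rightarrow> bool" where
  "W_eq s t \<longleftrightarrow> (\<forall>\<sigma>. (\<forall>i. time_warp (\<sigma> i)) \<longrightarrow> eval \<sigma> s = eval \<sigma> t)"

fun joins :: "trm list \<Rightarrow> trm" where
  "joins [] = One"
| "joins [t] = t"
| "joins (t # ts) = Join t (joins ts)"

inductive total_rec :: "nat \<Rightarrow> (nat list \<Rightarrow> nat) \<Rightarrow> bool" where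
  zero: "total_rec n (\<lambda>_. 0)"
| succ: "total_rec 1 (\<lambda>xs. Suc (hd xs))"
| proj: "i < n \<Longrightarrow> total_rec n (\<lambda>xs. xs ! i)"
| comp: "total_rec m g \<Longrightarrow> length fs = m \<Longrightarrow> (\<forall>f \<in> set fs. total_rec n f) \<Longrightarrow>
          total_rec n (\<lambda>xs. g (map (\<lambda>f. f xs) fs))"
| prim: "total_rec n g \<Longrightarrow> total_rec (n + 2) h \<Longrightarrow>
          total_rec (n + 1) (\<lambda>xs. rec_nat (g (tl xs)) (\<lambda>k r. h (k # r # tl xs)) (hd xs))"
| mu: "total_rec (n + 1) g \<Longrightarrow> (\<forall>ys. length ys = n \<longrightarrow> (\<exists>y. g (y # ys) = 0)) \<Longrightarrow>
          total_rec n (\<lambda>ys. LEAST y. g (y # ys) = 0)"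

definition decidable_set :: "nat set \<Rightarrow> bool" where
  "decidable_set S \<longleftrightarrow> (\<exists>f. total_rec 1 f \<and> (\<forall>x. x \<in> S \<longleftrightarrow> f [x] = 0))"

primrec code :: "trm \<Rightarrow> nat" where
  "code (Var i) = prod_encode (0, i)"
| "code (Meet s t) = prod_encode (1, prod_encode (code s, code t))"
| "code (Join s t) = prod_encode (2, prod_encode (code s, code t))"
| "code (Dot s t) = prod_encode (3, prod_encode (code s, code t))"
| "code (Prime s) = prod_encode (4, code s)"
| "code One = prod_encode (5, 0)"

definition equational_theory_codes :: "nat set" where
  "equational_theory_codes = {prod_encode (code s, code t) | s t. W_eq s t}"

definition basic_join_codes :: "nat set" where
  "basic_join_codes = {list_encode (map code ts) | ts.
      ts \<noteq> [] \<and> (\<forall>t \<in> set ts. basic t) \<and> W_leq One (joins ts)}"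

end

theory Submission
  imports Defs
begin


definition computable :: "nat \<Rightarrow> (nat list \<Rightarrow> nat) \<Rightarrow> bool" where
  "computable n f \<longleftrightarrow> (\<exists>g. total_rec n g \<and> (\<forall>xs. length xs = n \<longrightarrow> g xs = f xs))"

lemma computable_cong:
  "computable n f \<Longrightarrow> (\<And>xs. length xs = n \<Longrightarrow> f xs = g xs) \<Longrightarrow> computable n g"
  unfolding computable_def by metis

lemma tr_computable: "total_rec n f \<Longrightarrow> computable n f"
  unfolding computable_def by blast

lemma c_zero: "computable n (\<lambda>_. 0)"
  by (rule tr_computable) (rule total_rec.zero)

lemma c_succ: "computable 1 (\<lambda>xs. Suc (hd xs))"
  by (rule tr_computable) (rule total_rec.succ)

lemma c_proj: "i < n \<Longrightarrow> computable n (\<lambda>xs. xs ! i)"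
  by (rule tr_computable) (rule total_rec.proj)

lemma choose_list:
  assumes "\<forall>f \<in> set fs. computable n f"
  shows "\<exists>gs. length gs = length fs \<and> (\<forall>g\<in>set gs. total_rec n g) \<and>
     (\<forall>xs. length xs = n \<longrightarrow> map (\<lambda>f. f xs) gs = map (\<lambda>f. f xs) fs)"
  using assms
proof (induction fs)
  case Nil
  then show ?case by auto
next
  case (Cons f fs)
  then obtain gs where gs: "length gs = length fs" "\<forall>g\<in>set gs. total_rec n g"
    "\<forall>xs. length xs = n \<longrightarrow> map (\<lambda>f. f xs) gs = map (\<lambda>f. f xs) fs" by auto
  from Cons.prems obtain g where g: "total_rec n g" "\<forall>xs. length xs = n \<longrightarrow> g xs = f xs"
    unfolding computable_def by auto
  show ?case
    by (rule exI[of _ "g # gs"]) (use gs g in auto)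
qed

lemma c_comp:
  assumes "computable m g" "length fs = m" "\<forall>f \<in> set fs. computable n f"
  shows "computable n (\<lambda>xs. g (map (\<lambda>f. f xs) fs))"
proof -
  obtain g' where g': "total_rec m g'" "\<forall>xs. length xs = m \<longrightarrow> g' xs = g xs"
    using assms(1) unfolding computable_def by auto
  obtain gs where gs: "length gs = length fs" "\<forall>g\<in>set gs. total_rec n g"
     "\<forall>xs. length xs = n \<longrightarrow> map (\<lambda>f. f xs) gs = map (\<lambda>f. f xs) fs"
    using choose_list[OF assms(3)] by auto
  have "total_rec n (\<lambda>xs. g' (map (\<lambda>f. f xs) gs))"
    by (rule total_rec.comp[OF g'(1)]) (use gs assms(2) in auto)
  moreover have "\<forall>xs. length xs = n \<longrightarrow> g' (map (\<lambda>f. f xs) gs) = g (map (\<lambda>f. f xs) fs)"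
    using gs g' assms(2) by auto
  ultimately show ?thesis unfolding computable_def by blast
qed

lemma rec_nat_cong:
  assumes "\<And>k r. h k r = h' k r"
  shows "rec_nat a h n = rec_nat a h' n"
  by (induction n) (auto simp: assms)

lemma c_prim:
  assumes "computable n g" "computable (n + 2) h"
  shows "computable (n + 1) (\<lambda>xs. rec_nat (g (tl xs)) (\<lambda>k r. h (k # r # tl xs)) (hd xs))"
proof -
  obtain g' where g': "total_rec n g'" "\<forall>xs. length xs = n \<longrightarrow> g' xs = g xs"
    using assms(1) unfolding computable_def by auto
  obtain h' where h': "total_rec (n+2) h'" "\<forall>xs. length xs = n+2 \<longrightarrow> h' xs = h xs"
    using assms(2) unfolding computable_def by auto
  have "total_rec (n + 1) (\<lambda>xs. rec_nat (g' (tl xs)) (\<lambda>k r. h' (k # r # tl xs)) (hd xs))"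
    by (rule total_rec.prim[OF g'(1) h'(1)])
  moreover have "\<forall>xs. length xs = n + 1 \<longrightarrow>
      rec_nat (g' (tl xs)) (\<lambda>k r. h' (k # r # tl xs)) (hd xs) =
      rec_nat (g (tl xs)) (\<lambda>k r. h (k # r # tl xs)) (hd xs)"
    using g'(2) h'(2) by (auto intro: rec_nat_cong)
  ultimately show ?thesis unfolding computable_def by blast
qed

lemma c_mu:
  assumes "computable (n + 1) g" "\<forall>ys. length ys = n \<longrightarrow> (\<exists>y. g (y # ys) = 0)"
  shows "computable n (\<lambda>ys. LEAST y. g (y # ys) = 0)"
proof -
  obtain g' where g': "total_rec (n+1) g'" "\<forall>xs. length xs = n+1 \<longrightarrow> g' xs = g xs"
    using assms(1) unfolding computable_def by auto
  have eq: "\<And>ys y. length ys = n \<Longrightarrow> g' (y # ys) = g (y # ys)" using g'(2) by auto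
  have "total_rec n (\<lambda>ys. LEAST y. g' (y # ys) = 0)"
    by (rule total_rec.mu[OF g'(1)]) (use assms(2) eq in auto)
  moreover have "\<forall>ys. length ys = n \<longrightarrow> (LEAST y. g' (y # ys) = 0) = (LEAST y. g (y # ys) = 0)"
    using eq by auto
  ultimately show ?thesis unfolding computable_def by blast
qed

lemma c_comp1:
  assumes "computable 1 g" "computable n f"
  shows "computable n (\<lambda>xs. g [f xs])"
  using c_comp[OF assms(1), of "[f]" n] assms(2) by simp

lemma c_comp2:
  assumes "computable 2 g" "computable n f1" "computable n f2"
  shows "computable n (\<lambda>xs. g [f1 xs, f2 xs])"
  using c_comp[OF assms(1), of "[f1, f2]" n] assms(2,3) by simp

lemma c_const: "computable n (\<lambda>_. k)"
proof (induction k)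
  case 0
  then show ?case by (rule c_zero)
next
  case (Suc k)
  have "computable n (\<lambda>xs. Suc (hd [k]))"
    using c_comp1[OF c_succ Suc] by simp
  then show ?case by simp
qed

lemma c_iter:
  assumes c: "computable n c" and i: "computable n i" and h: "computable (n + 2) h"
  shows "computable n (\<lambda>ys. rec_nat (i ys) (\<lambda>k r. h (k # r # ys)) (c ys))"
proof -
  have P: "computable (n + 1) (\<lambda>xs. rec_nat (i (tl xs)) (\<lambda>k r. h (k # r # tl xs)) (hd xs))"
    by (rule c_prim[OF i h])
  let ?fs = "c # map (\<lambda>j ys. ys ! j) [0..<n]"
  have "computable n (\<lambda>ys. (\<lambda>xs. rec_nat (i (tl xs)) (\<lambda>k r. h (k # r # tl xs)) (hd xs)) (map (\<lambda>f. f ys) ?fs))"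
    by (rule c_comp[OF P]) (auto intro: c_proj c)
  then show ?thesis
  proof (rule computable_cong)
    fix ys :: "nat list" assume "length ys = n"
    have "map (\<lambda>j. ys ! j) [0..<n] = ys" using map_nth[of ys] \<open>length ys = n\<close> by simp
    then have "map (\<lambda>f. f ys) ?fs = c ys # ys"
      by (simp add: comp_def)
    then show "(\<lambda>xs. rec_nat (i (tl xs)) (\<lambda>k r. h (k # r # tl xs)) (hd xs)) (map (\<lambda>f. f ys) ?fs) =
        rec_nat (i ys) (\<lambda>k r. h (k # r # ys)) (c ys)" by simp
  qed
qed


lemma rec_nat_add: "rec_nat a (\<lambda>k r. Suc r) b = b + (a::nat)"
  by (induction b) auto

lemma c_add2: "computable 2 (\<lambda>xs. xs ! 0 + xs ! 1)"
proof -
  have h: "computable (2 + 2) (\<lambda>zs. Suc (zs ! 1))"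
    using c_comp1[OF c_succ c_proj[of 1 "2+2"]] by simp
  have "computable 2 (\<lambda>ys. rec_nat (ys ! 1) (\<lambda>k r. (\<lambda>zs. Suc (zs ! 1)) (k # r # ys)) (ys ! 0))"
    by (rule c_iter[OF c_proj c_proj h]) auto
  then show ?thesis by (rule computable_cong) (simp add: rec_nat_add)
qed

lemma c_add: "computable n f \<Longrightarrow> computable n g \<Longrightarrow> computable n (\<lambda>xs. f xs + g xs)"
  using c_comp2[OF c_add2] by simp

lemma c_Suc: "computable n f \<Longrightarrow> computable n (\<lambda>xs. Suc (f xs))"
  using c_comp1[OF c_succ] by simp

lemma rec_nat_pred: "rec_nat 0 (\<lambda>k r. k) m = m - (1::nat)"
  by (cases m) auto

lemma c_pred1: "computable 1 (\<lambda>xs. xs ! 0 - 1)"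
proof -
  have "computable 1 (\<lambda>ys. rec_nat ((\<lambda>_. 0) ys) (\<lambda>k r. (\<lambda>zs. zs ! 0) (k # r # ys)) (ys ! 0))"
    by (rule c_iter[OF c_proj c_zero c_proj]) auto
  then show ?thesis by (rule computable_cong) (simp add: rec_nat_pred)
qed

lemma c_pred: "computable n f \<Longrightarrow> computable n (\<lambda>xs. f xs - 1)"
  using c_comp1[OF c_pred1] by simp

lemma rec_nat_sub: "rec_nat a (\<lambda>k r. r - Suc 0) b = (a::nat) - b"
  by (induction b) auto

lemma c_sub2: "computable 2 (\<lambda>xs. xs ! 0 - xs ! 1)"
proof -
  have h: "computable (2 + 2) (\<lambda>zs. zs ! 1 - 1)"
    by (rule c_pred[OF c_proj]) simp
  have "computable 2 (\<lambda>ys. rec_nat (ys ! 0) (\<lambda>k r. (\<lambda>zs. zs ! 1 - 1) (k # r # ys)) (ys ! 1))"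
    by (rule c_iter[OF c_proj c_proj h]) auto
  then show ?thesis by (rule computable_cong) (simp add: rec_nat_sub)
qed

lemma c_sub: "computable n f \<Longrightarrow> computable n g \<Longrightarrow> computable n (\<lambda>xs. f xs - g xs)"
  using c_comp2[OF c_sub2] by simp

lemma rec_nat_mult: "rec_nat 0 (\<lambda>k r. r + y) x = x * (y::nat)"
  by (induction x) auto

lemma c_mult2: "computable 2 (\<lambda>xs. xs ! 0 * xs ! 1)"
proof -
  have h: "computable (2 + 2) (\<lambda>zs. zs ! 1 + zs ! 3)"
    by (rule c_add[OF c_proj c_proj]) auto
  have "computable 2 (\<lambda>ys. rec_nat ((\<lambda>_. 0) ys) (\<lambda>k r. (\<lambda>zs. zs ! 1 + zs ! 3) (k # r # ys)) (ys ! 0))"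
    by (rule c_iter[OF c_proj c_zero h]) auto
  then show ?thesis by (rule computable_cong) (simp add: rec_nat_mult)
qed

lemma c_mult: "computable n f \<Longrightarrow> computable n g \<Longrightarrow> computable n (\<lambda>xs. f xs * g xs)"
  using c_comp2[OF c_mult2] by simp

lemma rec_nat_tri: "rec_nat 0 (\<lambda>k r. Suc (r + k)) x = triangle x"
  by (induction x) auto

lemma c_tri1: "computable 1 (\<lambda>xs. triangle (xs ! 0))"
proof -
  have h: "computable (1 + 2) (\<lambda>zs. zs ! 1 + Suc (zs ! 0))"
    by (rule c_add[OF c_proj c_Suc[OF c_proj]]) auto
  have "computable 1 (\<lambda>ys. rec_nat ((\<lambda>_. 0) ys) (\<lambda>k r. (\<lambda>zs. zs ! 1 + Suc (zs ! 0)) (k # r # ys)) (ys ! 0))"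
    by (rule c_iter[OF c_proj c_zero h]) auto
  then show ?thesis by (rule computable_cong) (simp add: rec_nat_tri)
qed

lemma c_tri: "computable n f \<Longrightarrow> computable n (\<lambda>xs. triangle (f xs))"
  using c_comp1[OF c_tri1] by simp

lemma c_pe: "computable n f \<Longrightarrow> computable n g \<Longrightarrow> computable n (\<lambda>xs. prod_encode (f xs, g xs))"
  unfolding prod_encode_def by (simp add: c_add c_tri)

lemma triangle_mono: "a \<le> b \<Longrightarrow> triangle a \<le> triangle b"
  unfolding triangle_def by (intro div_le_mono mult_le_mono) auto

definition diag :: "nat \<Rightarrow> nat" where
  "diag n = (LEAST k. Suc n - triangle (Suc k) = 0)"

lemma diag_eq: "prod_decode n = (a, b) \<Longrightarrow> diag n = a + b"
proof -
  assume d: "prod_decode n = (a, b)"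
  have "n = prod_encode (a, b)" using d prod_decode_inverse by metis
  then have n: "n = triangle (a + b) + a"
    by (simp add: prod_encode_def)
  show ?thesis unfolding diag_def
  proof (rule Least_equality)
    show "Suc n - triangle (Suc (a + b)) = 0" using n by simp
  next
    fix k assume k: "Suc n - triangle (Suc k) = 0"
    show "a + b \<le> k"
    proof (rule ccontr)
      assume "\<not> a + b \<le> k"
      then have "triangle (Suc k) \<le> triangle (a + b)" by (intro triangle_mono) auto
      then show False using k n by simp
    qed
  qed
qed

lemma fst_decode_eq: "fst (prod_decode n) = n - triangle (diag n)"
proof (cases "prod_decode n")
  case (Pair a b)
  have "n = prod_encode (a, b)" using Pair prod_decode_inverse by metis
  then have n: "n = triangle (a + b) + a"
    by (simp add: prod_encode_def)
  show ?thesis using Pair diag_eq[OF Pair] n by simp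
qed

lemma snd_decode_eq: "snd (prod_decode n) = diag n - fst (prod_decode n)"
  by (cases "prod_decode n") (simp add: diag_eq)

lemma c_diag1: "computable 1 (\<lambda>xs. diag (xs ! 0))"
proof -
  have g: "computable (1 + 1) (\<lambda>zs. Suc (zs ! 1) - triangle (Suc (zs ! 0)))"
    by (rule c_sub[OF c_Suc[OF c_proj] c_tri[OF c_Suc[OF c_proj]]]) auto
  have "computable 1 (\<lambda>ys. LEAST y. (\<lambda>zs. Suc (zs ! 1) - triangle (Suc (zs ! 0))) (y # ys) = 0)"
  proof (rule c_mu[OF g], intro allI impI)
    fix ys :: "nat list" assume "length ys = 1"
    have "Suc (ys ! 0) - triangle (Suc (ys ! 0)) = 0" by simp
    then show "\<exists>y. (\<lambda>zs. Suc (zs ! 1) - triangle (Suc (zs ! 0))) (y # ys) = 0"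
      by (intro exI[of _ "ys ! 0"]) simp
  qed
  then show ?thesis by (rule computable_cong) (simp add: diag_def)
qed

lemma c_fst1: "computable 1 (\<lambda>xs. fst (prod_decode (xs ! 0)))"
proof -
  have "computable 1 (\<lambda>xs. xs ! 0 - triangle (diag (xs ! 0)))"
    by (rule c_sub[OF c_proj c_tri[OF c_diag1]]) auto
  then show ?thesis by (rule computable_cong) (simp add: fst_decode_eq)
qed

lemma c_snd1: "computable 1 (\<lambda>xs. snd (prod_decode (xs ! 0)))"
proof -
  have "computable 1 (\<lambda>xs. diag (xs ! 0) - fst (prod_decode (xs ! 0)))"
    by (rule c_sub[OF c_diag1 c_fst1])
  then show ?thesis by (rule computable_cong) (simp add: snd_decode_eq)
qed

definition rec1 :: "(nat \<Rightarrow> nat) \<Rightarrow> bool" where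
  "rec1 f \<longleftrightarrow> computable 1 (\<lambda>xs. f (hd xs))"

lemma rec1_hd_nth: "computable 1 (\<lambda>xs. f (xs ! 0)) \<Longrightarrow> rec1 f"
  unfolding rec1_def by (erule computable_cong) (auto simp: hd_conv_nth length_Suc_conv)

named_theorems rec1_intros

lemma r_id [rec1_intros]: "rec1 (\<lambda>x. x)"
  by (rule rec1_hd_nth) (rule c_proj, simp)

lemma r_const [rec1_intros]: "rec1 (\<lambda>x. k)"
  unfolding rec1_def by (rule c_const)

lemma r_Suc [rec1_intros]: "rec1 f \<Longrightarrow> rec1 (\<lambda>x. Suc (f x))"
  unfolding rec1_def by (rule c_Suc)

lemma r_add [rec1_intros]: "rec1 f \<Longrightarrow> rec1 g \<Longrightarrow> rec1 (\<lambda>x. f x + g x)"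
  unfolding rec1_def by (rule c_add)

lemma r_sub [rec1_intros]: "rec1 f \<Longrightarrow> rec1 g \<Longrightarrow> rec1 (\<lambda>x. f x - g x)"
  unfolding rec1_def by (rule c_sub)

lemma r_mult [rec1_intros]: "rec1 f \<Longrightarrow> rec1 g \<Longrightarrow> rec1 (\<lambda>x. f x * g x)"
  unfolding rec1_def by (rule c_mult)

lemma r_pe [rec1_intros]: "rec1 f \<Longrightarrow> rec1 g \<Longrightarrow> rec1 (\<lambda>x. prod_encode (f x, g x))"
  unfolding rec1_def by (rule c_pe)

lemma r_comp: "rec1 f \<Longrightarrow> rec1 g \<Longrightarrow> rec1 (\<lambda>x. f (g x))"
  unfolding rec1_def using c_comp1[of "\<lambda>xs. f (hd xs)" 1 "\<lambda>xs. g (hd xs)"] by simp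

lemma r_fst1: "rec1 (\<lambda>x. fst (prod_decode x))"
  by (rule rec1_hd_nth) (rule c_fst1)

lemma r_snd1: "rec1 (\<lambda>x. snd (prod_decode x))"
  by (rule rec1_hd_nth) (rule c_snd1)

lemma r_fst [rec1_intros]: "rec1 f \<Longrightarrow> rec1 (\<lambda>x. fst (prod_decode (f x)))"
  using r_comp[OF r_fst1] by simp

lemma r_snd [rec1_intros]: "rec1 f \<Longrightarrow> rec1 (\<lambda>x. snd (prod_decode (f x)))"
  using r_comp[OF r_snd1] by simp

lemma r_if_eq [rec1_intros]:
  assumes "rec1 f" "rec1 g" "rec1 a" "rec1 b"
  shows "rec1 (\<lambda>x. if f x = g x then a x else b x)"
proof -
  have "rec1 (\<lambda>x. a x * (1 - ((f x - g x) + (g x - f x))) + b x * (1 - (1 - ((f x - g x) + (g x - f x)))))"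
    by (intro rec1_intros assms)
  moreover have "(\<lambda>x. a x * (1 - ((f x - g x) + (g x - f x))) + b x * (1 - (1 - ((f x - g x) + (g x - f x))))) =
     (\<lambda>x. if f x = g x then a x else b x)"
    by (rule ext) auto
  ultimately show ?thesis by simp
qed

lemma rec_nat_funpow: "rec_nat a (\<lambda>k r. F r) n = (F ^^ n) a"
  by (induction n) auto

lemma r_iter:
  assumes c: "rec1 c" and i: "rec1 i" and s: "rec1 s"
  shows "rec1 (\<lambda>x. ((\<lambda>z. s (prod_encode (x, z))) ^^ c x) (i x))"
proof -
  have s': "computable 1 (\<lambda>xs. s (hd xs))" using s unfolding rec1_def .
  have h: "computable (1 + 2) (\<lambda>zs. s (prod_encode (zs ! 2, zs ! 1)))"
    using c_comp1[OF s' c_pe[OF c_proj c_proj, of 2 "1+2" 1]] by simp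
  have "computable 1 (\<lambda>ys. rec_nat (i (hd ys)) (\<lambda>k r. (\<lambda>zs. s (prod_encode (zs ! 2, zs ! 1))) (k # r # ys)) (c (hd ys)))"
    by (rule c_iter[OF c[unfolded rec1_def] i[unfolded rec1_def] h])
  then show ?thesis unfolding rec1_def
    by (rule computable_cong) (auto simp: rec_nat_funpow length_Suc_conv)
qed

lemma rec1_cong: "rec1 f \<Longrightarrow> (\<And>x. f x = g x) \<Longrightarrow> rec1 g"
  by (metis ext)


section \<open>Encoded lists\<close>

abbreviation enc :: "nat list \<Rightarrow> nat" where "enc \<equiv> list_encode"
abbreviation dec :: "nat \<Rightarrow> nat list" where "dec \<equiv> list_decode"

definition hd_e :: "nat \<Rightarrow> nat" where "hd_e n = fst (prod_decode (n - 1))"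
definition tl_e :: "nat \<Rightarrow> nat" where "tl_e n = snd (prod_decode (n - 1))"

lemma hd_e_Suc [simp]: "hd_e (Suc (prod_encode (y, l))) = y" by (simp add: hd_e_def)
lemma tl_e_Suc [simp]: "tl_e (Suc (prod_encode (y, l))) = l" by (simp add: tl_e_def)

lemma r_hd_e [rec1_intros]: "rec1 f \<Longrightarrow> rec1 (\<lambda>x. hd_e (f x))"
  unfolding hd_e_def by (intro rec1_intros)
lemma r_tl_e [rec1_intros]: "rec1 f \<Longrightarrow> rec1 (\<lambda>x. tl_e (f x))"
  unfolding tl_e_def by (intro rec1_intros)

lemma length_le_enc: "length ys \<le> enc ys"
proof (induction ys)
  case Nil then show ?case by simp
next
  case (Cons y ys)
  have "enc ys \<le> prod_encode (y, enc ys)" by (rule le_prod_encode_2)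
  then show ?case using Cons by simp
qed

lemma enc_eq_0_iff [simp]: "enc ys = 0 \<longleftrightarrow> ys = []"
  by (cases ys) auto

lemma foldl_iter:
  fixes b :: "nat \<Rightarrow> nat" and x :: nat
  defines "F \<equiv> (\<lambda>z. (\<lambda>w. if fst (prod_decode (snd (prod_decode w))) = 0 then snd (prod_decode w)
        else prod_encode (tl_e (fst (prod_decode (snd (prod_decode w)))),
          b (prod_encode (fst (prod_decode w), prod_encode (hd_e (fst (prod_decode (snd (prod_decode w)))),
               snd (prod_decode (snd (prod_decode w)))))))) (prod_encode (x, z)))"
  shows "(F ^^ k) (prod_encode (enc ys, acc)) =
     prod_encode (enc (drop k ys), foldl (\<lambda>acc y. b (prod_encode (x, prod_encode (y, acc)))) acc (take k ys))"
proof (induction k)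
  case 0
  then show ?case by simp
next
  case (Suc k)
  show ?case
  proof (cases "drop k ys")
    case Nil
    then have "take k ys = ys" "drop (Suc k) ys = []" "take (Suc k) ys = ys" by auto
    then show ?thesis using Suc Nil by (simp add: F_def)
  next
    case (Cons y rest)
    then have k: "k < length ys" by (metis drop_all list.simps(3) not_le)
    have y: "ys ! k = y" using Cons k by (metis hd_drop_conv_nth list.sel(1))
    have "drop (Suc k) ys = rest" using Cons by (metis drop_Suc list.sel(3) tl_drop)
    moreover have "take (Suc k) ys = take k ys @ [y]" using k y by (simp add: take_Suc_conv_app_nth)
    ultimately show ?thesis using Suc Cons by (simp add: F_def)
  qed
qed

lemma r_foldl:
  assumes b: "rec1 b" and a: "rec1 a" and L: "rec1 L"
  shows "rec1 (\<lambda>x. foldl (\<lambda>acc y. b (prod_encode (x, prod_encode (y, acc)))) (a x) (dec (L x)))"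
proof -
  let ?s = "\<lambda>w. if fst (prod_decode (snd (prod_decode w))) = 0 then snd (prod_decode w)
        else prod_encode (tl_e (fst (prod_decode (snd (prod_decode w)))),
          b (prod_encode (fst (prod_decode w), prod_encode (hd_e (fst (prod_decode (snd (prod_decode w)))),
               snd (prod_decode (snd (prod_decode w)))))))"
  have s: "rec1 ?s" by (intro rec1_intros r_comp[OF b])
  have "rec1 (\<lambda>x. ((\<lambda>z. ?s (prod_encode (x, z))) ^^ L x) (prod_encode (L x, a x)))"
    by (rule r_iter[OF L _ s]) (intro rec1_intros L a)
  then have "rec1 (\<lambda>x. snd (prod_decode (((\<lambda>z. ?s (prod_encode (x, z))) ^^ L x) (prod_encode (L x, a x)))))"
    by (rule r_snd)
  then show ?thesis
  proof (rule rec1_cong)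
    fix x
    let ?ys = "dec (L x)"
    have eL: "L x = enc ?ys" by simp
    have "((\<lambda>z. ?s (prod_encode (x, z))) ^^ L x) (prod_encode (L x, a x)) =
      ((\<lambda>z. ?s (prod_encode (x, z))) ^^ L x) (prod_encode (enc ?ys, a x))" by simp
    also have "\<dots> = prod_encode (enc (drop (L x) ?ys),
       foldl (\<lambda>acc y. b (prod_encode (x, prod_encode (y, acc)))) (a x) (take (L x) ?ys))"
      by (rule foldl_iter)
    also have "\<dots> = prod_encode (enc [], foldl (\<lambda>acc y. b (prod_encode (x, prod_encode (y, acc)))) (a x) ?ys)"
      using length_le_enc[of ?ys] by simp
    finally show "snd (prod_decode (((\<lambda>z. ?s (prod_encode (x, z))) ^^ L x) (prod_encode (L x, a x)))) =
       foldl (\<lambda>acc y. b (prod_encode (x, prod_encode (y, acc)))) (a x) (dec (L x))" by simp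
  qed
qed

lemma foldl_cons_rev: "foldl (\<lambda>acc y. Suc (prod_encode (y, acc))) (enc zs) ys = enc (rev ys @ zs)"
proof (induction ys arbitrary: zs)
  case Nil then show ?case by simp
next
  case (Cons a ys) then show ?case using Cons.IH[of "a # zs"] by simp
qed

lemma r_rev [rec1_intros]: "rec1 L \<Longrightarrow> rec1 (\<lambda>x. enc (rev (dec (L x))))"
proof -
  assume L: "rec1 L"
  have "rec1 (\<lambda>w. Suc (prod_encode (fst (prod_decode (snd (prod_decode w))), snd (prod_decode (snd (prod_decode w))))))" (is "rec1 ?b")
    by (intro rec1_intros)
  note bb = this
  have "rec1 (\<lambda>x. foldl (\<lambda>acc y. Suc (prod_encode (y, acc))) 0 (dec (L x)))"
    using r_foldl[OF bb r_const L, of 0] by simp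
  then show ?thesis by (rule rec1_cong) (use foldl_cons_rev[of "[]"] in simp)
qed

lemma r_foldr:
  assumes b: "rec1 b" and a: "rec1 a" and L: "rec1 L"
  shows "rec1 (\<lambda>x. foldr (\<lambda>y acc. b (prod_encode (x, prod_encode (y, acc)))) (dec (L x)) (a x))"
proof -
  have "rec1 (\<lambda>x. foldl (\<lambda>acc y. b (prod_encode (x, prod_encode (y, acc)))) (a x) (dec (enc (rev (dec (L x))))))"
    by (rule r_foldl[OF b a r_rev[OF L]])
  then show ?thesis by (rule rec1_cong) (simp add: foldr_conv_foldl)
qed

lemma enc_map_foldr: "enc (map f ys) = foldr (\<lambda>y acc. Suc (prod_encode (f y, acc))) ys 0"
  by (induction ys) auto

lemma r_map:
  assumes F: "rec1 F" and L: "rec1 L"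
  shows "rec1 (\<lambda>x. enc (map (\<lambda>y. F (prod_encode (x, y))) (dec (L x))))"
proof -
  have "rec1 (\<lambda>w. Suc (prod_encode (F (prod_encode (fst (prod_decode w), fst (prod_decode (snd (prod_decode w))))),
      snd (prod_decode (snd (prod_decode w))))))"
    by (intro rec1_intros r_comp[OF F])
  note bb = this
  have "rec1 (\<lambda>x. foldr (\<lambda>y acc. Suc (prod_encode (F (prod_encode (x, y)), acc))) (dec (L x)) 0)"
    using r_foldr[OF bb r_const L, of 0] by simp
  then show ?thesis
    by (rule rec1_cong) (simp add: enc_map_foldr)
qed

lemma enc_app_foldr: "enc (ys @ zs) = foldr (\<lambda>y acc. Suc (prod_encode (y, acc))) ys (enc zs)"
  by (induction ys) auto

lemma r_app [rec1_intros]: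
  assumes L1: "rec1 L1" and L2: "rec1 L2"
  shows "rec1 (\<lambda>x. enc (dec (L1 x) @ dec (L2 x)))"
proof -
  have "rec1 (\<lambda>w. Suc (prod_encode (fst (prod_decode (snd (prod_decode w))), snd (prod_decode (snd (prod_decode w))))))"
    by (intro rec1_intros)
  note bb = this
  have "rec1 (\<lambda>x. foldr (\<lambda>y acc. Suc (prod_encode (y, acc))) (dec (L1 x)) (L2 x))"
    using r_foldr[OF bb L2 L1] by simp
  then show ?thesis
    by (rule rec1_cong) (use enc_app_foldr[of _ "dec (L2 _)"] in simp)
qed

lemma enc_concat_foldr: "enc (concat (map dec ys)) = foldr (\<lambda>y acc. enc (dec y @ dec acc)) ys 0"
proof (induction ys)
  case Nil then show ?case by simp
next
  case (Cons a ys) then show ?case by (simp add: Cons.IH[symmetric])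
qed

lemma r_concat [rec1_intros]:
  assumes L: "rec1 L"
  shows "rec1 (\<lambda>x. enc (concat (map dec (dec (L x)))))"
proof -
  have "rec1 (\<lambda>w. enc (dec (fst (prod_decode (snd (prod_decode w)))) @ dec (snd (prod_decode (snd (prod_decode w))))))"
    by (intro rec1_intros)
  note bb = this
  have "rec1 (\<lambda>x. foldr (\<lambda>y acc. enc (dec y @ dec acc)) (dec (L x)) 0)"
    using r_foldr[OF bb r_const L, of 0] by simp
  then show ?thesis
    by (rule rec1_cong) (simp add: enc_concat_foldr)
qed

lemma r_comprehension:
  assumes F: "rec1 F" and L1: "rec1 L1" and L2: "rec1 L2"
  shows "rec1 (\<lambda>x. enc (concat (map (\<lambda>y. map (\<lambda>z. F (prod_encode (x, prod_encode (y, z)))) (dec (L2 x))) (dec (L1 x)))))"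
proof -
  have F': "rec1 (\<lambda>w. F (prod_encode (fst (prod_decode (fst (prod_decode w))), prod_encode (snd (prod_decode (fst (prod_decode w))), snd (prod_decode w)))))"
    by (intro rec1_intros r_comp[OF F])
  have L2': "rec1 (\<lambda>w. L2 (fst (prod_decode w)))" by (intro rec1_intros r_comp[OF L2])
  have inner: "rec1 (\<lambda>w. enc (map (\<lambda>z. F (prod_encode (fst (prod_decode w), prod_encode (snd (prod_decode w), z)))) (dec (L2 (fst (prod_decode w))))))"
    using r_map[OF F' L2'] by simp
  have "rec1 (\<lambda>x. enc (map (\<lambda>y. enc (map (\<lambda>z. F (prod_encode (x, prod_encode (y, z)))) (dec (L2 x)))) (dec (L1 x))))"
    using r_map[OF inner L1] by simp
  from r_concat[OF this] show ?thesis by (simp add: comp_def)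
qed

lemma r_sumlist:
  assumes F: "rec1 F" and L: "rec1 L"
  shows "rec1 (\<lambda>x. sum_list (map (\<lambda>y. F (prod_encode (x, y))) (dec (L x))))"
proof -
  have "rec1 (\<lambda>w. F (prod_encode (fst (prod_decode w), fst (prod_decode (snd (prod_decode w))))) + snd (prod_decode (snd (prod_decode w))))"
    by (intro rec1_intros r_comp[OF F])
  note bb = this
  have "rec1 (\<lambda>x. foldr (\<lambda>y acc. F (prod_encode (x, y)) + acc) (dec (L x)) 0)"
    using r_foldr[OF bb r_const L, of 0] by simp
  then show ?thesis
    by (rule rec1_cong) (simp add: sum_list.eq_foldr foldr_map comp_def)
qed


section \<open>Course of values\<close>

primrec histL :: "(nat \<Rightarrow> nat) \<Rightarrow> nat \<Rightarrow> nat list" where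
  "histL G 0 = []"
| "histL G (Suc k) = G (prod_encode (k, enc (histL G k))) # histL G k"

definition cov :: "(nat \<Rightarrow> nat) \<Rightarrow> nat \<Rightarrow> nat" where
  "cov G n = G (prod_encode (n, enc (histL G n)))"

lemma length_histL [simp]: "length (histL G n) = n"
  by (induction n) auto

lemma histL_nth: "m < n \<Longrightarrow> histL G n ! (n - Suc m) = cov G m"
proof (induction n)
  case 0 then show ?case by simp
next
  case (Suc n)
  show ?case
  proof (cases "m = n")
    case True then show ?thesis by (simp add: cov_def)
  next
    case False
    then have "m < n" using Suc by simp
    then have "Suc n - Suc m = Suc (n - Suc m)" by simp
    then show ?thesis using Suc.IH \<open>m < n\<close> by simp
  qed
qed

lemma hist_iter:
  "((\<lambda>z. prod_encode (Suc (fst (prod_decode z)), Suc (prod_encode (G z, snd (prod_decode z))))) ^^ k)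
     (prod_encode (0, 0)) = prod_encode (k, enc (histL G k))"
  by (induction k) auto

lemma r_hist: "rec1 G \<Longrightarrow> rec1 (\<lambda>n. enc (histL G n))"
proof -
  assume G: "rec1 G"
  let ?s = "\<lambda>w. prod_encode (Suc (fst (prod_decode (snd (prod_decode w)))),
       Suc (prod_encode (G (snd (prod_decode w)), snd (prod_decode (snd (prod_decode w))))))"
  have s: "rec1 ?s" by (intro rec1_intros r_comp[OF G])
  have "rec1 (\<lambda>x. ((\<lambda>z. ?s (prod_encode (x, z))) ^^ x) (prod_encode (0, 0)))"
    by (rule r_iter[OF r_id r_const s])
  then have "rec1 (\<lambda>x. snd (prod_decode (((\<lambda>z. ?s (prod_encode (x, z))) ^^ x) (prod_encode (0, 0)))))"
    by (rule r_snd)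
  then show ?thesis by (rule rec1_cong) (simp add: hist_iter)
qed

lemma r_cov: "rec1 G \<Longrightarrow> rec1 (cov G)"
proof -
  assume G: "rec1 G"
  have "rec1 (\<lambda>n. G (prod_encode (n, enc (histL G n))))"
    by (intro r_comp[OF G] rec1_intros r_hist[OF G])
  then show ?thesis unfolding cov_def[abs_def] .
qed

definition lk :: "nat \<Rightarrow> nat \<Rightarrow> nat" where
  "lk h j = hd_e ((tl_e ^^ j) h)"

lemma tl_e_iter: "j \<le> length ys \<Longrightarrow> (tl_e ^^ j) (enc ys) = enc (drop j ys)"
proof (induction j)
  case 0 then show ?case by simp
next
  case (Suc j)
  then have "j < length ys" by simp
  then obtain y rest where d: "drop j ys = y # rest" by (metis Cons_nth_drop_Suc)
  then have "drop (Suc j) ys = rest" by (metis drop_Suc list.sel(3) tl_drop)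
  then show ?case using Suc d by simp
qed

lemma lk_enc: "j < length ys \<Longrightarrow> lk (enc ys) j = ys ! j"
proof -
  assume j: "j < length ys"
  then obtain y rest where d: "drop j ys = y # rest" by (metis Cons_nth_drop_Suc)
  have "ys ! j = y" using d j by (metis hd_drop_conv_nth list.sel(1))
  then show ?thesis using tl_e_iter[of j ys] j d by (simp add: lk_def)
qed

lemma r_lk [rec1_intros]: "rec1 H \<Longrightarrow> rec1 J \<Longrightarrow> rec1 (\<lambda>x. lk (H x) (J x))"
proof -
  assume H: "rec1 H" and J: "rec1 J"
  have "rec1 (\<lambda>x. ((\<lambda>z. (\<lambda>w. tl_e (snd (prod_decode w))) (prod_encode (x, z))) ^^ J x) (H x))"
    by (rule r_iter[OF J H]) (intro rec1_intros)
  then have "rec1 (\<lambda>x. hd_e (((\<lambda>z. (\<lambda>w. tl_e (snd (prod_decode w))) (prod_encode (x, z))) ^^ J x) (H x)))"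
    by (rule r_hd_e)
  then show ?thesis by (simp add: lk_def)
qed

definition cv :: "nat \<Rightarrow> nat \<Rightarrow> nat \<Rightarrow> nat" where
  "cv h n m = lk h (n - Suc m)"

lemma r_cv [rec1_intros]: "rec1 H \<Longrightarrow> rec1 N \<Longrightarrow> rec1 M \<Longrightarrow> rec1 (\<lambda>x. cv (H x) (N x) (M x))"
  unfolding cv_def by (intro rec1_intros)

lemma cv_hist: "m < n \<Longrightarrow> cv (enc (histL G n)) n m = cov G m"
  unfolding cv_def by (simp add: lk_enc histL_nth)



abbreviation TW where "TW \<equiv> time_warp"

lemma Sup_range_enat: "Sup (range enat) = \<infinity>"
proof -
  have "infinite (range enat)" by (simp add: inj_on_def finite_image_iff)
  then show ?thesis by (simp add: Sup_enat_def)
qed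

lemma enat_all_le_inf: "(\<And>n. enat n \<le> x) \<Longrightarrow> x = \<infinity>"
  by (metis enat_ord_simps(2) lessI not_le not_infinity_eq)

lemma tw_mono: "TW f \<Longrightarrow> mono f"
proof (rule monoI)
  fix a b :: enat assume "TW f" "a \<le> b"
  then have "f (Sup {a, b}) = Sup (f ` {a, b})" unfolding time_warp_def by blast
  moreover have "Sup {a, b} = b" using \<open>a \<le> b\<close> by (simp add: sup_absorb2)
  ultimately have "f b = sup (f a) (f b)" by simp
  then show "f a \<le> f b" by (metis sup.cobounded1)
qed

lemma tw_0: "TW f \<Longrightarrow> f 0 = 0"
proof -
  assume "TW f"
  then have "f (Sup {}) = Sup (f ` {})" unfolding time_warp_def by blast
  then show ?thesis by (simp add: bot_enat_def)
qed

lemma tw_inf_val: "TW f \<Longrightarrow> f \<infinity> = (SUP n. f (enat n))"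
proof -
  assume "TW f"
  then have "f (Sup (range enat)) = Sup (f ` range enat)" unfolding time_warp_def by blast
  then show ?thesis by (simp add: Sup_range_enat image_comp)
qed

lemma tw_charI:
  assumes m: "mono f" and z: "f 0 = 0" and i: "f \<infinity> = (SUP n. f (enat n))"
  shows "TW f"
  unfolding time_warp_def
proof
  fix X :: "enat set"
  show "f (Sup X) = Sup (f ` X)"
  proof (cases "X = {}")
    case True then show ?thesis using z by (simp add: bot_enat_def)
  next
    case ne: False
    show ?thesis
    proof (cases "finite X")
      case True
      then have "Sup X = Max X" using ne by (simp add: cSup_eq_Max)
      moreover have "Sup (f ` X) = Max (f ` X)" using ne True by (simp add: cSup_eq_Max)
      ultimately show ?thesis using mono_Max_commute[OF m True ne] by simp
    next
      case False
      then have sx: "Sup X = \<infinity>" using ne by (simp add: Sup_enat_def)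
      have "f \<infinity> \<le> Sup (f ` X)"
      proof -
        have "f (enat n) \<le> Sup (f ` X)" for n
        proof -
          have "\<exists>a\<in>X. enat n \<le> a"
          proof (rule ccontr)
            assume "\<not> (\<exists>a\<in>X. enat n \<le> a)"
            then have "\<And>y. y \<in> X \<Longrightarrow> y \<le> enat n" by (meson linear)
            then have "finite X" by (rule finite_enat_bounded)
            then show False using False by simp
          qed
          then obtain a where "a \<in> X" "enat n \<le> a" by blast
          then have "f (enat n) \<le> f a" using m by (simp add: monoD)
          also have "\<dots> \<le> Sup (f ` X)" using \<open>a \<in> X\<close> by (simp add: Sup_upper)
          finally show ?thesis .
        qed
        then show ?thesis using i by (simp add: SUP_least)
      qed
      moreover have "Sup (f ` X) \<le> f \<infinity>"
        by (rule Sup_least) (use m in \<open>auto simp: monoD\<close>)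
      ultimately show ?thesis using sx by simp
    qed
  qed
qed

lemma tw_char: "TW f \<longleftrightarrow> mono f \<and> f 0 = 0 \<and> f \<infinity> = (SUP n. f (enat n))"
  using tw_charI tw_mono tw_0 tw_inf_val by blast

lemma tw_id: "TW id"
  unfolding time_warp_def by simp

lemma tw_comp: "TW f \<Longrightarrow> TW g \<Longrightarrow> TW (f \<circ> g)"
  unfolding time_warp_def by (simp add: image_comp)

lemma tw_sup: "TW f \<Longrightarrow> TW g \<Longrightarrow> TW (sup f g)"
  unfolding time_warp_def by (simp add: Complete_Lattices.SUP_sup_distrib)

lemma tw_inf: assumes f: "TW f" and g: "TW g" shows "TW (inf f g)"
proof (rule tw_charI)
  have mf: "mono f" and mg: "mono g" using f g by (auto simp: tw_mono)
  show "mono (inf f g)" using mf mg by (auto simp: mono_def le_infI1 le_infI2)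
  show "inf f g 0 = 0" using f g by (simp add: tw_0)
  have "inf f g \<infinity> = inf (SUP n. f (enat n)) (SUP n. g (enat n))"
    using f g by (simp add: tw_inf_val)
  also have "\<dots> = (SUP n. SUP m. inf (f (enat n)) (g (enat m)))"
    by (rule SUP_inf_distrib2)
  also have "\<dots> = (SUP n. inf f g (enat n))"
  proof (rule antisym)
    show "(SUP n. SUP m. inf (f (enat n)) (g (enat m))) \<le> (SUP n. inf f g (enat n))"
    proof (intro SUP_least)
      fix n m
      have "inf (f (enat n)) (g (enat m)) \<le> inf (f (enat (max n m))) (g (enat (max n m)))"
        using mf mg by (intro inf_mono) (auto simp: monoD)
      also have "\<dots> \<le> (SUP n. inf f g (enat n))" by (rule SUP_upper2[of "max n m"]) auto
      finally show "inf (f (enat n)) (g (enat m)) \<le> (SUP n. inf f g (enat n))" .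
    qed
    show "(SUP n. inf f g (enat n)) \<le> (SUP n. SUP m. inf (f (enat n)) (g (enat m)))"
    proof (rule SUP_least)
      fix n :: nat
      have "inf f g (enat n) = inf (f (enat n)) (g (enat n))" by simp
      also have "\<dots> \<le> (SUP m. inf (f (enat n)) (g (enat m)))" by (rule SUP_upper) simp
      also have "\<dots> \<le> (SUP n. SUP m. inf (f (enat n)) (g (enat m)))"
        by (rule SUP_upper[of n UNIV "\<lambda>n. SUP m. inf (f (enat n)) (g (enat m))"]) simp
      finally show "inf f g (enat n) \<le> (SUP n. SUP m. inf (f (enat n)) (g (enat m)))" .
    qed
  qed
  finally show "inf f g \<infinity> = (SUP n. inf f g (enat n))" .
qed

lemma pw_enat: "pw (enat n) = enat (n - 1)"
proof -
  have set: "{of_nat k | k :: nat. of_nat k < enat n} = enat ` {..<n}"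
    by (auto simp: of_nat_eq_enat)
  show ?thesis
  proof (cases n)
    case 0 then show ?thesis unfolding pw_def set by (simp add: bot_enat_def zero_enat_def)
  next
    case (Suc m)
    have "Sup (enat ` {..<n}) = enat m"
    proof (rule antisym)
      show "Sup (enat ` {..<n}) \<le> enat m" by (rule Sup_least) (auto simp: Suc)
      show "enat m \<le> Sup (enat ` {..<n})" by (rule Sup_upper) (auto simp: Suc)
    qed
    then show ?thesis unfolding pw_def set using Suc by simp
  qed
qed

lemma pw_infty: "pw \<infinity> = \<infinity>"
proof -
  have "enat n \<le> pw \<infinity>" for n
    unfolding pw_def by (rule Sup_upper) (auto simp: of_nat_eq_enat)
  then show ?thesis by (rule enat_all_le_inf)
qed

section \<open>Explicit star\<close>

definition Ssup :: "(enat \<Rightarrow> enat) \<Rightarrow> enat \<Rightarrow> enat" where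
  "Ssup f m = Sup {k. f k < m}"

definition starf :: "(enat \<Rightarrow> enat) \<Rightarrow> enat \<Rightarrow> enat" where
  "starf f m = (if m = \<infinity> then (SUP n. Ssup f (enat n)) else Ssup f m)"

lemma less_enat_le_pred: "x < enat n \<Longrightarrow> x \<le> enat (n - Suc 0)"
  by (cases x) auto

lemma S_char:
  assumes f: "TW f" and n: "0 < n"
  shows "k \<le> Ssup f (enat n) \<longleftrightarrow> f k < enat n"
proof
  assume "f k < enat n" then show "k \<le> Ssup f (enat n)" unfolding Ssup_def by (simp add: Sup_upper)
next
  assume k: "k \<le> Ssup f (enat n)"
  have "f (Ssup f (enat n)) = Sup (f ` {k. f k < enat n})"
    using f unfolding Ssup_def time_warp_def by blast
  also have "\<dots> \<le> enat (n - Suc 0)" by (rule Sup_least) (auto intro: less_enat_le_pred)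
  also have "\<dots> < enat n" using n by simp
  finally have "f (Ssup f (enat n)) < enat n" .
  moreover have "f k \<le> f (Ssup f (enat n))" using k tw_mono[OF f] by (simp add: monoD)
  ultimately show "f k < enat n" by simp
qed

lemma S_0: "Ssup f 0 = 0"
  unfolding Ssup_def by (simp add: bot_enat_def)

lemma S_enat0 [simp]: "Ssup f (enat 0) = 0"
  using S_0 by (simp add: zero_enat_def)

lemma S_mono: "a \<le> b \<Longrightarrow> Ssup f a \<le> Ssup f b"
  unfolding Ssup_def by (rule Sup_subset_mono) auto

lemma starf_enat [simp]: "starf f (enat n) = Ssup f (enat n)"
  by (simp add: starf_def)

lemma starf_0 [simp]: "starf f 0 = 0"
  by (simp add: starf_def S_0)

lemma starf_infty: "starf f \<infinity> = (SUP n. Ssup f (enat n))"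
  by (simp add: starf_def)

lemma tw_starf: "TW (starf f)"
proof (rule tw_charI)
  show "mono (starf f)"
  proof (rule monoI)
    fix a b :: enat assume ab: "a \<le> b"
    show "starf f a \<le> starf f b"
    proof (cases b)
      case (enat nb)
      then obtain na where "a = enat na" using ab by (cases a) auto
      then show ?thesis using ab enat by (simp add: S_mono)
    next
      case infinity
      show ?thesis
      proof (cases a)
        case (enat na)
        then show ?thesis using infinity SUP_upper[of na UNIV "\<lambda>n. Ssup f (enat n)"] by (simp add: starf_infty)
      next
        case infinity
        then show ?thesis using \<open>b = \<infinity>\<close> by simp
      qed
    qed
  qed
  show "starf f 0 = 0" using S_0 by (simp add: zero_enat_def)
  show "starf f \<infinity> = (SUP n. starf f (enat n))" by (simp add: starf_infty)
qed

lemma starf_below: assumes f: "TW f" shows "f (starf f m) \<le> pw m"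
proof (cases m)
  case (enat n)
  show ?thesis
  proof (cases n)
    case 0
    then show ?thesis using enat tw_0[OF f] by simp
  next
    case (Suc j)
    have "f (Ssup f (enat n)) < enat n" using S_char[OF f, of n "Ssup f (enat n)"] Suc by simp
    then have "f (Ssup f (enat n)) \<le> enat (n - Suc 0)" by (rule less_enat_le_pred)
    then show ?thesis using enat Suc by (simp add: pw_enat)
  qed
next
  case infinity then show ?thesis by (simp add: pw_infty)
qed

lemma starf_greatest:
  assumes f: "TW f" and h: "TW h" and hb: "\<And>m. f (h m) \<le> pw m"
  shows "h \<le> starf f"
proof -
  have fin: "h (enat n) \<le> Ssup f (enat n)" for n
  proof (cases n)
    case 0 then show ?thesis using tw_0[OF h] by (simp add: zero_enat_def[symmetric])
  next
    case (Suc j)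
    have "f (h (enat n)) \<le> enat j" using hb[of "enat n"] Suc by (simp add: pw_enat)
    then have "f (h (enat n)) < enat n" using Suc by (metis enat_ord_simps(2) le_less_trans lessI)
    then show ?thesis using S_char[OF f] Suc by simp
  qed
  show ?thesis
  proof (rule le_funI)
    fix m show "h m \<le> starf f m"
    proof (cases m)
      case (enat n) then show ?thesis using fin by simp
    next
      case infinity
      have "(SUP n. h (enat n)) \<le> (SUP n. Ssup f (enat n))"
      proof (rule SUP_least)
        fix n show "h (enat n) \<le> (SUP n. Ssup f (enat n))"
          using fin[of n] SUP_upper[of n UNIV "\<lambda>n. Ssup f (enat n)"] by simp
      qed
      then show ?thesis using tw_inf_val[OF h] infinity by (simp add: starf_infty)
    qed
  qed
qed

lemma tw_star_eq: assumes f: "TW f" shows "tw_star f = starf f"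
  unfolding tw_star_def tw_res_def
proof (rule Greatest_equality)
  show "TW (starf f) \<and> f \<circ> starf f \<le> pw"
    using tw_starf starf_below[OF f] by (auto simp: le_fun_def)
next
  fix y assume "TW y \<and> f \<circ> y \<le> pw"
  then show "y \<le> starf f" using starf_greatest[OF f] by (auto simp: le_fun_def)
qed

lemma tw_star: "TW f \<Longrightarrow> TW (tw_star f)"
  using tw_star_eq tw_starf by simp

lemma star_resid:
  assumes f: "TW f" and h: "TW h"
  shows "h \<le> tw_star f \<longleftrightarrow> (\<forall>m. f (h m) \<le> pw m)"
proof
  assume "h \<le> tw_star f"
  then have "\<And>m. f (h m) \<le> f (starf f m)" using tw_mono[OF f] tw_star_eq[OF f]
    by (simp add: le_fun_def monoD)
  then show "\<forall>m. f (h m) \<le> pw m" using starf_below[OF f] order_trans by blast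
next
  assume "\<forall>m. f (h m) \<le> pw m"
  then show "h \<le> tw_star f" using starf_greatest[OF f h] tw_star_eq[OF f] by simp
qed


lemma starf_inv_aux:
  assumes f: "TW f" and n: "0 < n"
  shows "starf f k < enat n \<longleftrightarrow> k \<le> f (enat n)"
proof (cases k)
  case (enat j)
  show ?thesis
  proof (cases j)
    case 0 then show ?thesis using enat n by (simp add: zero_enat_def[symmetric] enat_0_iff)
  next
    case (Suc i)
    have "starf f k < enat n \<longleftrightarrow> \<not> enat n \<le> Ssup f (enat j)" using enat by (simp add: not_le)
    also have "\<dots> \<longleftrightarrow> \<not> f (enat n) < enat j" using S_char[OF f, of j "enat n"] Suc by simp
    also have "\<dots> \<longleftrightarrow> k \<le> f (enat n)" using enat by (simp add: not_less)
    finally show ?thesis .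
  qed
next
  case infinity
  show ?thesis
  proof
    assume lt: "starf f k < enat n"
    show "k \<le> f (enat n)"
    proof (rule ccontr)
      assume "\<not> k \<le> f (enat n)"
      then obtain M where M: "f (enat n) = enat M" using infinity by (cases "f (enat n)") auto
      then have "f (enat n) < enat (Suc M)" by simp
      then have "enat n \<le> Ssup f (enat (Suc M))" using S_char[OF f, of "Suc M" "enat n"] by simp
      also have "\<dots> \<le> starf f k" using infinity SUP_upper[of "Suc M" UNIV "\<lambda>n. Ssup f (enat n)"]
        by (simp add: starf_infty)
      finally show False using lt by simp
    qed
  next
    assume "k \<le> f (enat n)"
    then have fi: "f (enat n) = \<infinity>" using infinity by simp
    have "Ssup f (enat j) \<le> enat (n - Suc 0)" for j
    proof (cases j)
      case 0 then show ?thesis by simp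
    next
      case (Suc i)
      have "\<not> enat n \<le> Ssup f (enat j)" using S_char[OF f, of j "enat n"] Suc fi by simp
      then show ?thesis using less_enat_le_pred by (simp add: not_le)
    qed
    then have "starf f k \<le> enat (n - Suc 0)" using infinity by (simp add: starf_infty SUP_least)
    also have "\<dots> < enat n" using n by simp
    finally show "starf f k < enat n" .
  qed
qed

lemma starf_inv: assumes f: "TW f" shows "starf (starf f) = f"
proof -
  have fin: "Ssup (starf f) (enat n) = f (enat n)" for n
  proof (cases n)
    case 0 then show ?thesis using tw_0[OF f] by (simp add: zero_enat_def)
  next
    case (Suc i)
    then have n: "0 < n" by simp
    have iff: "k \<le> Ssup (starf f) (enat n) \<longleftrightarrow> k \<le> f (enat n)" for k
      using S_char[OF tw_starf n] starf_inv_aux[OF f n] by simp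
    show ?thesis using iff[of "f (enat n)"] iff[of "Ssup (starf f) (enat n)"] by (simp add: antisym)
  qed
  show ?thesis
  proof (rule ext)
    fix m show "starf (starf f) m = f m"
    proof (cases m)
      case (enat n) then show ?thesis using fin by simp
    next
      case infinity then show ?thesis using fin tw_inf_val[OF f] by (simp add: starf_infty)
    qed
  qed
qed

lemma star_inv: "TW f \<Longrightarrow> tw_star (tw_star f) = f"
  using tw_star_eq tw_starf starf_inv by simp

lemma star_antitone: "TW a \<Longrightarrow> TW b \<Longrightarrow> a \<le> b \<Longrightarrow> tw_star b \<le> tw_star a"
proof -
  assume a: "TW a" and b: "TW b" and ab: "a \<le> b"
  have "\<forall>m. b (tw_star b m) \<le> pw m" using star_resid[OF b tw_star[OF b]] by simp
  then have "\<forall>m. a (tw_star b m) \<le> pw m" using ab by (meson le_fun_def order_trans)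
  then show ?thesis using star_resid[OF a tw_star[OF b]] by simp
qed

lemma star_sup: assumes f: "TW f" and g: "TW g"
  shows "tw_star (sup f g) = inf (tw_star f) (tw_star g)"
proof -
  have fg: "TW (sup f g)" using tw_sup f g .
  have iff: "h \<le> tw_star (sup f g) \<longleftrightarrow> h \<le> inf (tw_star f) (tw_star g)" if h: "TW h" for h
    using star_resid[OF fg h] star_resid[OF f h] star_resid[OF g h] by auto
  have t1: "TW (tw_star (sup f g))" by (rule tw_star[OF fg])
  have t2: "TW (inf (tw_star f) (tw_star g))" by (rule tw_inf[OF tw_star[OF f] tw_star[OF g]])
  show ?thesis using iff[OF t1] iff[OF t2] by (simp add: antisym)
qed

lemma star_inf: assumes f: "TW f" and g: "TW g"
  shows "tw_star (inf f g) = sup (tw_star f) (tw_star g)"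
proof -
  have "tw_star (sup (tw_star f) (tw_star g)) = inf f g"
    using star_sup[OF tw_star[OF f] tw_star[OF g]] star_inv[OF f] star_inv[OF g] by simp
  then have "tw_star (inf f g) = tw_star (tw_star (sup (tw_star f) (tw_star g)))" by simp
  also have "\<dots> = sup (tw_star f) (tw_star g)" by (rule star_inv[OF tw_sup[OF tw_star[OF f] tw_star[OF g]]])
  finally show ?thesis .
qed

lemma leq_char: assumes f: "TW f" and g: "TW g"
  shows "f \<le> g \<longleftrightarrow> id \<le> tw_star (f \<circ> tw_star g)"
proof -
  have "id \<le> tw_star (f \<circ> tw_star g) \<longleftrightarrow> (\<forall>m. f (tw_star g m) \<le> pw m)"
    using star_resid[OF tw_comp[OF f tw_star[OF g]] tw_id] by simp
  also have "\<dots> \<longleftrightarrow> tw_star g \<le> tw_star f" using star_resid[OF f tw_star[OF g]] by simp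
  also have "\<dots> \<longleftrightarrow> f \<le> g"
  proof
    assume "tw_star g \<le> tw_star f"
    then have "tw_star (tw_star f) \<le> tw_star (tw_star g)"
      by (rule star_antitone[OF tw_star[OF g] tw_star[OF f]])
    then show "f \<le> g" using star_inv[OF f] star_inv[OF g] by simp
  next
    assume "f \<le> g" then show "tw_star g \<le> tw_star f" by (rule star_antitone[OF f g])
  qed
  finally show ?thesis by simp
qed


lemma tw_SUP: "finite A \<Longrightarrow> A \<noteq> {} \<Longrightarrow> (\<forall>a\<in>A. TW (F a)) \<Longrightarrow> TW (SUP a\<in>A. F a)"
proof (induction A rule: finite_ne_induct)
  case (singleton x) then show ?case by simp
next
  case (insert x A)
  have a: "TW (SUP a\<in>A. F a)" using insert.IH insert.prems by blast
  have b: "TW (F x)" using insert.prems by blast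
  show ?case unfolding SUP_insert by (rule tw_sup[OF b a])
qed

lemma tw_INF: "finite A \<Longrightarrow> A \<noteq> {} \<Longrightarrow> (\<forall>a\<in>A. TW (F a)) \<Longrightarrow> TW (INF a\<in>A. F a)"
proof (induction A rule: finite_ne_induct)
  case (singleton x) then show ?case by simp
next
  case (insert x A)
  have a: "TW (INF a\<in>A. F a)" using insert.IH insert.prems by blast
  have b: "TW (F x)" using insert.prems by blast
  show ?case unfolding INF_insert by (rule tw_inf[OF b a])
qed

lemma star_SUP: "finite A \<Longrightarrow> A \<noteq> {} \<Longrightarrow> (\<forall>a\<in>A. TW (F a)) \<Longrightarrow>
   tw_star (SUP a\<in>A. F a) = (INF a\<in>A. tw_star (F a))"
proof (induction A rule: finite_ne_induct)
  case (singleton x) then show ?case by simp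
next
  case (insert x A)
  have t: "TW (SUP a\<in>A. F a)" using insert.hyps insert.prems by (intro tw_SUP) auto
  have b: "TW (F x)" using insert.prems by blast
  have IH: "tw_star (SUP a\<in>A. F a) = (INF a\<in>A. tw_star (F a))" using insert.IH insert.prems by blast
  have "tw_star (sup (F x) (SUP a\<in>A. F a)) = inf (tw_star (F x)) (tw_star (SUP a\<in>A. F a))"
    by (rule star_sup[OF b t])
  also have "\<dots> = inf (tw_star (F x)) (INF a\<in>A. tw_star (F a))" by (simp only: IH)
  finally show ?case unfolding SUP_insert INF_insert .
qed

lemma star_INF: "finite A \<Longrightarrow> A \<noteq> {} \<Longrightarrow> (\<forall>a\<in>A. TW (F a)) \<Longrightarrow>
   tw_star (INF a\<in>A. F a) = (SUP a\<in>A. tw_star (F a))"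
proof (induction A rule: finite_ne_induct)
  case (singleton x) then show ?case by simp
next
  case (insert x A)
  have t: "TW (INF a\<in>A. F a)" using insert.hyps insert.prems by (intro tw_INF) auto
  have b: "TW (F x)" using insert.prems by blast
  have IH: "tw_star (INF a\<in>A. F a) = (SUP a\<in>A. tw_star (F a))" using insert.IH insert.prems by blast
  have "tw_star (inf (F x) (INF a\<in>A. F a)) = sup (tw_star (F x)) (tw_star (INF a\<in>A. F a))"
    by (rule star_inf[OF b t])
  also have "\<dots> = sup (tw_star (F x)) (SUP a\<in>A. tw_star (F a))" by (simp only: IH)
  finally show ?case unfolding SUP_insert INF_insert .
qed

lemma comp_SUP_left: "TW f \<Longrightarrow> f \<circ> (SUP a\<in>A. G a) = (SUP a\<in>A. f \<circ> (G a :: enat \<Rightarrow> enat))"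
proof (rule ext)
  fix x assume f: "TW f"
  have "f (Sup ((\<lambda>a. G a x) ` A)) = Sup (f ` (\<lambda>a. G a x) ` A)" using f unfolding time_warp_def by blast
  then show "(f \<circ> (SUP a\<in>A. G a)) x = (SUP a\<in>A. f \<circ> G a) x" by (simp add: image_comp)
qed

lemma mono_Inf_fin: "mono (f :: enat \<Rightarrow> enat) \<Longrightarrow> finite X \<Longrightarrow> X \<noteq> {} \<Longrightarrow> f (Inf X) = Inf (f ` X)"
  by (simp add: cInf_eq_Min mono_Min_commute)

lemma comp_INF_left: "mono (f :: enat \<Rightarrow> enat) \<Longrightarrow> finite A \<Longrightarrow> A \<noteq> {} \<Longrightarrow> f \<circ> (INF a\<in>A. G a) = (INF a\<in>A. f \<circ> (G a :: enat \<Rightarrow> enat))"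
proof (rule ext)
  fix x assume "mono f" "finite A" "A \<noteq> {}"
  then have "f (Inf ((\<lambda>a. G a x) ` A)) = Inf (f ` (\<lambda>a. G a x) ` A)" by (intro mono_Inf_fin) auto
  then show "(f \<circ> (INF a\<in>A. G a)) x = (INF a\<in>A. f \<circ> G a) x" by (simp add: image_comp)
qed

lemma comp_SUP_right: "(SUP a\<in>A. G a) \<circ> h = (SUP a\<in>A. (G a :: enat \<Rightarrow> enat) \<circ> (h :: enat \<Rightarrow> enat))"
  by (rule ext) (simp add: image_image comp_def)

lemma comp_INF_right: "(INF a\<in>A. G a) \<circ> h = (INF a\<in>A. (G a :: enat \<Rightarrow> enat) \<circ> (h :: enat \<Rightarrow> enat))"
  by (rule ext) (simp add: image_image comp_def)

lemma set_compr: "set (concat (map (\<lambda>a. map (\<lambda>b. f a b) B) A)) = (\<Union>a\<in>set A. (\<lambda>b. f a b) ` set B)"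
  by auto

lemma SUP_UN': "(SUP x\<in>(\<Union>y\<in>A. g y). H x) = (SUP y\<in>A. SUP x\<in>g y. H x :: enat \<Rightarrow> enat)"
  by (rule order_antisym) (blast intro: SUP_least SUP_upper2)+

lemma INF_UN': "(INF x\<in>(\<Union>y\<in>A. g y). H x) = (INF y\<in>A. INF x\<in>g y. H x :: enat \<Rightarrow> enat)"
  by (rule order_antisym) (blast intro: INF_greatest INF_lower2)+

lemma SUP_compr: "(SUP x\<in>set (concat (map (\<lambda>a. map (\<lambda>b. f a b) B) A)). H x) = (SUP a\<in>set A. SUP b\<in>set B. H (f a b) :: enat \<Rightarrow> enat)"
  unfolding set_compr by (simp only: SUP_UN' image_image)

lemma INF_compr: "(INF x\<in>set (concat (map (\<lambda>a. map (\<lambda>b. f a b) B) A)). H x) = (INF a\<in>set A. INF b\<in>set B. H (f a b) :: enat \<Rightarrow> enat)"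
  unfolding set_compr by (simp only: INF_UN' image_image)

section \<open>Terms\<close>

definition tws :: "(nat \<Rightarrow> enat \<Rightarrow> enat) \<Rightarrow> bool" where
  "tws \<sigma> \<longleftrightarrow> (\<forall>i. TW (\<sigma> i))"

lemma tw_eval: "tws \<sigma> \<Longrightarrow> TW (eval \<sigma> t)"
  by (induction t) (auto simp: tws_def tw_inf tw_sup tw_comp tw_star tw_id)

definition cprod :: "('a list \<Rightarrow> 'a list \<Rightarrow> 'a list) \<Rightarrow> 'a list list \<Rightarrow> 'a list list \<Rightarrow> 'a list list" where
  "cprod f A B = concat (map (\<lambda>a. map (\<lambda>b. f a b) B) A)"

definition dotl :: "trm list \<Rightarrow> trm list \<Rightarrow> trm list" where
  "dotl a b = concat (map (\<lambda>u. map (\<lambda>v. Dot u v) b) a)"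

primrec DC :: "trm \<Rightarrow> trm list list \<times> trm list list" where
  "DC (Var i) = ([[Var i]], [[Var i]])"
| "DC One = ([[One]], [[One]])"
| "DC (Meet s t) = (cprod (@) (fst (DC s)) (fst (DC t)), snd (DC s) @ snd (DC t))"
| "DC (Join s t) = (fst (DC s) @ fst (DC t), cprod (@) (snd (DC s)) (snd (DC t)))"
| "DC (Dot s t) = (cprod dotl (fst (DC s)) (fst (DC t)), cprod dotl (snd (DC s)) (snd (DC t)))"
| "DC (Prime s) = (map (map Prime) (snd (DC s)), map (map Prime) (fst (DC s)))"

definition wfl :: "trm list list \<Rightarrow> bool" where
  "wfl L \<longleftrightarrow> L \<noteq> [] \<and> (\<forall>a\<in>set L. a \<noteq> [] \<and> (\<forall>u\<in>set a. basic u))"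

lemma set_cprod: "set (cprod f A B) = {f a b | a b. a \<in> set A \<and> b \<in> set B}"
  unfolding cprod_def by auto

lemma set_dotl: "set (dotl a b) = {Dot u v | u v. u \<in> set a \<and> v \<in> set b}"
  unfolding dotl_def by auto

lemma cprod_ne: "A \<noteq> [] \<Longrightarrow> B \<noteq> [] \<Longrightarrow> cprod f A B \<noteq> []"
proof -
  assume "A \<noteq> []" "B \<noteq> []"
  then obtain a b where "a \<in> set A" "b \<in> set B" by (meson list.set_sel(1))
  then have "f a b \<in> set (cprod f A B)" unfolding set_cprod by blast
  then show ?thesis by auto
qed

lemma dotl_ne: "a \<noteq> [] \<Longrightarrow> b \<noteq> [] \<Longrightarrow> dotl a b \<noteq> []"
proof -
  assume "a \<noteq> []" "b \<noteq> []"
  then obtain u v where "u \<in> set a" "v \<in> set b" by (meson list.set_sel(1))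
  then have "Dot u v \<in> set (dotl a b)" unfolding set_dotl by blast
  then show ?thesis by auto
qed

lemma wfl_cprod_app: "wfl A \<Longrightarrow> wfl B \<Longrightarrow> wfl (cprod (@) A B)"
  unfolding wfl_def using cprod_ne[of A B "(@)"] unfolding set_cprod by auto

lemma wfl_cprod_dot: "wfl A \<Longrightarrow> wfl B \<Longrightarrow> wfl (cprod dotl A B)"
proof -
  assume A: "wfl A" and B: "wfl B"
  have "cprod dotl A B \<noteq> []" using A B unfolding wfl_def by (intro cprod_ne) auto
  moreover have "x \<noteq> [] \<and> (\<forall>u\<in>set x. basic u)" if xin: "x \<in> set (cprod dotl A B)" for x
  proof -
    obtain a b where x: "x = dotl a b" "a \<in> set A" "b \<in> set B" using xin unfolding set_cprod by blast
    have a: "a \<noteq> []" "\<forall>u\<in>set a. basic u" using x(2) A unfolding wfl_def by auto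
    have b: "b \<noteq> []" "\<forall>u\<in>set b. basic u" using x(3) B unfolding wfl_def by auto
    have "x \<noteq> []" using x(1) a(1) b(1) dotl_ne by simp
    moreover have "\<forall>u\<in>set x. basic u"
    proof
      fix u assume "u \<in> set x"
      then have "u \<in> set (dotl a b)" using x(1) by simp
      then obtain v w where "u = Dot v w" "v \<in> set a" "w \<in> set b" unfolding set_dotl by blast
      then show "basic u" using a(2) b(2) by (simp add: basic.intros(2))
    qed
    ultimately show ?thesis by blast
  qed
  ultimately show ?thesis unfolding wfl_def by blast
qed

lemma wfl_map_prime: "wfl A \<Longrightarrow> wfl (map (map Prime) A)"
  unfolding wfl_def by (auto intro: basic.intros)

lemma wfl_DC: "wfl (fst (DC t)) \<and> wfl (snd (DC t))"
proof (induction t)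
  case (Var i) then show ?case by (auto simp: wfl_def intro: basic.intros)
next
  case One then show ?case by (auto simp: wfl_def intro: basic.intros)
next
  case (Meet s t) then show ?case by (simp add: wfl_cprod_app) (auto simp: wfl_def)
next
  case (Join s t) then show ?case by (simp add: wfl_cprod_app) (auto simp: wfl_def)
next
  case (Dot s t) then show ?case by (simp add: wfl_cprod_dot)
next
  case (Prime s) then show ?case by (simp add: wfl_map_prime)
qed

definition JM :: "(nat \<Rightarrow> enat \<Rightarrow> enat) \<Rightarrow> trm list list \<Rightarrow> enat \<Rightarrow> enat" where
  "JM \<sigma> L = (SUP a\<in>set L. INF u\<in>set a. eval \<sigma> u)"

definition MJ :: "(nat \<Rightarrow> enat \<Rightarrow> enat) \<Rightarrow> trm list list \<Rightarrow> enat \<Rightarrow> enat" where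
  "MJ \<sigma> L = (INF a\<in>set L. SUP u\<in>set a. eval \<sigma> u)"


lemma wflD: "wfl L \<Longrightarrow> a \<in> set L \<Longrightarrow> a \<noteq> []"
  unfolding wfl_def by blast

lemma wflD0: "wfl L \<Longrightarrow> L \<noteq> []"
  unfolding wfl_def by blast

lemma JM_cprod_app: "JM \<sigma> (cprod (@) A B) = inf (JM \<sigma> A) (JM \<sigma> B)"
proof -
  have "JM \<sigma> (cprod (@) A B) = (SUP a\<in>set A. SUP b\<in>set B. INF u\<in>set (a @ b). eval \<sigma> u)"
    unfolding JM_def cprod_def by (rule SUP_compr)
  also have "\<dots> = (SUP a\<in>set A. SUP b\<in>set B. inf (INF u\<in>set a. eval \<sigma> u) (INF u\<in>set b. eval \<sigma> u))"
    by (simp only: set_append INF_union)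
  also have "\<dots> = inf (JM \<sigma> A) (JM \<sigma> B)"
    unfolding JM_def by (rule SUP_inf_distrib2[symmetric])
  finally show ?thesis .
qed

lemma MJ_cprod_app: "MJ \<sigma> (cprod (@) A B) = sup (MJ \<sigma> A) (MJ \<sigma> B)"
proof -
  have "MJ \<sigma> (cprod (@) A B) = (INF a\<in>set A. INF b\<in>set B. SUP u\<in>set (a @ b). eval \<sigma> u)"
    unfolding MJ_def cprod_def by (rule INF_compr)
  also have "\<dots> = (INF a\<in>set A. INF b\<in>set B. sup (SUP u\<in>set a. eval \<sigma> u) (SUP u\<in>set b. eval \<sigma> u))"
    by (simp only: set_append SUP_union)
  also have "\<dots> = sup (MJ \<sigma> A) (MJ \<sigma> B)"
    unfolding MJ_def by (rule INF_sup_distrib2[symmetric])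
  finally show ?thesis .
qed

lemma JM_app: "JM \<sigma> (A @ B) = sup (JM \<sigma> A) (JM \<sigma> B)"
  unfolding JM_def by (simp only: set_append SUP_union)

lemma MJ_app: "MJ \<sigma> (A @ B) = inf (MJ \<sigma> A) (MJ \<sigma> B)"
  unfolding MJ_def by (simp only: set_append INF_union)

lemma INF_dotl:
  assumes s: "tws \<sigma>" and a: "a \<noteq> []" and b: "b \<noteq> []"
  shows "(INF x\<in>set (dotl a b). eval \<sigma> x) = (INF u\<in>set a. eval \<sigma> u) \<circ> (INF v\<in>set b. eval \<sigma> v)"
proof -
  have "(INF x\<in>set (dotl a b). eval \<sigma> x) = (INF u\<in>set a. INF v\<in>set b. eval \<sigma> (Dot u v))"
    unfolding dotl_def by (rule INF_compr)
  also have "\<dots> = (INF u\<in>set a. INF v\<in>set b. eval \<sigma> u \<circ> eval \<sigma> v)" by simp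
  also have "\<dots> = (INF u\<in>set a. eval \<sigma> u \<circ> (INF v\<in>set b. eval \<sigma> v))"
  proof (rule INF_cong[OF refl])
    fix u show "(INF v\<in>set b. eval \<sigma> u \<circ> eval \<sigma> v) = eval \<sigma> u \<circ> (INF v\<in>set b. eval \<sigma> v)"
      using b by (intro comp_INF_left[symmetric] tw_mono tw_eval s) auto
  qed
  also have "\<dots> = (INF u\<in>set a. eval \<sigma> u) \<circ> (INF v\<in>set b. eval \<sigma> v)"
    by (rule comp_INF_right[symmetric])
  finally show ?thesis .
qed

lemma SUP_dotl:
  assumes s: "tws \<sigma>"
  shows "(SUP x\<in>set (dotl a b). eval \<sigma> x) = (SUP u\<in>set a. eval \<sigma> u) \<circ> (SUP v\<in>set b. eval \<sigma> v)"
proof -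
  have "(SUP x\<in>set (dotl a b). eval \<sigma> x) = (SUP u\<in>set a. SUP v\<in>set b. eval \<sigma> (Dot u v))"
    unfolding dotl_def by (rule SUP_compr)
  also have "\<dots> = (SUP u\<in>set a. SUP v\<in>set b. eval \<sigma> u \<circ> eval \<sigma> v)" by simp
  also have "\<dots> = (SUP u\<in>set a. eval \<sigma> u \<circ> (SUP v\<in>set b. eval \<sigma> v))"
  proof (rule SUP_cong[OF refl])
    fix u show "(SUP v\<in>set b. eval \<sigma> u \<circ> eval \<sigma> v) = eval \<sigma> u \<circ> (SUP v\<in>set b. eval \<sigma> v)"
      by (intro comp_SUP_left[symmetric] tw_eval s)
  qed
  also have "\<dots> = (SUP u\<in>set a. eval \<sigma> u) \<circ> (SUP v\<in>set b. eval \<sigma> v)"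
    by (rule comp_SUP_right[symmetric])
  finally show ?thesis .
qed

lemma tw_INF_list: "tws \<sigma> \<Longrightarrow> a \<noteq> [] \<Longrightarrow> TW (INF u\<in>set a. eval \<sigma> u)"
  by (intro tw_INF tw_eval ballI) auto

lemma tw_SUP_list: "tws \<sigma> \<Longrightarrow> a \<noteq> [] \<Longrightarrow> TW (SUP u\<in>set a. eval \<sigma> u)"
  by (intro tw_SUP tw_eval ballI) auto

lemma JM_cprod_dot:
  assumes s: "tws \<sigma>" and A: "wfl A" and B: "wfl B"
  shows "JM \<sigma> (cprod dotl A B) = JM \<sigma> A \<circ> JM \<sigma> B"
proof -
  have "JM \<sigma> (cprod dotl A B) = (SUP a\<in>set A. SUP b\<in>set B. INF x\<in>set (dotl a b). eval \<sigma> x)"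
    unfolding JM_def cprod_def by (rule SUP_compr)
  also have "\<dots> = (SUP a\<in>set A. SUP b\<in>set B. (INF u\<in>set a. eval \<sigma> u) \<circ> (INF v\<in>set b. eval \<sigma> v))"
    using A B by (intro SUP_cong[OF refl] INF_dotl[OF s]) (auto dest: wflD)
  also have "\<dots> = (SUP a\<in>set A. (INF u\<in>set a. eval \<sigma> u) \<circ> (SUP b\<in>set B. INF v\<in>set b. eval \<sigma> v))"
    using A by (intro SUP_cong[OF refl] comp_SUP_left[symmetric] tw_INF_list[OF s]) (auto dest: wflD)
  also have "\<dots> = JM \<sigma> A \<circ> JM \<sigma> B"
    unfolding JM_def by (rule comp_SUP_right[symmetric])
  finally show ?thesis .
qed

lemma MJ_cprod_dot:
  assumes s: "tws \<sigma>" and A: "wfl A" and B: "wfl B"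
  shows "MJ \<sigma> (cprod dotl A B) = MJ \<sigma> A \<circ> MJ \<sigma> B"
proof -
  have "MJ \<sigma> (cprod dotl A B) = (INF a\<in>set A. INF b\<in>set B. SUP x\<in>set (dotl a b). eval \<sigma> x)"
    unfolding MJ_def cprod_def by (rule INF_compr)
  also have "\<dots> = (INF a\<in>set A. INF b\<in>set B. (SUP u\<in>set a. eval \<sigma> u) \<circ> (SUP v\<in>set b. eval \<sigma> v))"
    by (intro INF_cong[OF refl] SUP_dotl[OF s])
  also have "\<dots> = (INF a\<in>set A. (SUP u\<in>set a. eval \<sigma> u) \<circ> (INF b\<in>set B. SUP v\<in>set b. eval \<sigma> v))"
    using A B by (intro INF_cong[OF refl] comp_INF_left[symmetric] tw_mono tw_SUP_list[OF s])
       (auto dest: wflD wflD0)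
  also have "\<dots> = MJ \<sigma> A \<circ> MJ \<sigma> B"
    unfolding MJ_def by (rule comp_INF_right[symmetric])
  finally show ?thesis .
qed

lemma JM_prime:
  assumes s: "tws \<sigma>" and C: "wfl C"
  shows "JM \<sigma> (map (map Prime) C) = tw_star (MJ \<sigma> C)"
proof -
  have "tw_star (MJ \<sigma> C) = (SUP c\<in>set C. tw_star (SUP u\<in>set c. eval \<sigma> u))"
    unfolding MJ_def using C by (intro star_INF tw_SUP_list[OF s] ballI) (auto dest: wflD wflD0)
  also have "\<dots> = (SUP c\<in>set C. INF u\<in>set c. tw_star (eval \<sigma> u))"
    using C by (intro SUP_cong[OF refl] star_SUP tw_eval[OF s] ballI) (auto dest: wflD)
  also have "\<dots> = JM \<sigma> (map (map Prime) C)"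
    unfolding JM_def by (simp add: image_image)
  finally show ?thesis by simp
qed

lemma MJ_prime:
  assumes s: "tws \<sigma>" and D: "wfl D"
  shows "MJ \<sigma> (map (map Prime) D) = tw_star (JM \<sigma> D)"
proof -
  have "tw_star (JM \<sigma> D) = (INF c\<in>set D. tw_star (INF u\<in>set c. eval \<sigma> u))"
    unfolding JM_def using D by (intro star_SUP tw_INF_list[OF s] ballI) (auto dest: wflD wflD0)
  also have "\<dots> = (INF c\<in>set D. SUP u\<in>set c. tw_star (eval \<sigma> u))"
    using D by (intro INF_cong[OF refl] star_INF tw_eval[OF s] ballI) (auto dest: wflD)
  also have "\<dots> = MJ \<sigma> (map (map Prime) D)"
    unfolding MJ_def by (simp add: image_image)
  finally show ?thesis by simp
qed

lemma nf: assumes s: "tws \<sigma>"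
  shows "eval \<sigma> t = JM \<sigma> (fst (DC t)) \<and> eval \<sigma> t = MJ \<sigma> (snd (DC t))"
proof (induction t)
  case (Var i) then show ?case by (simp add: JM_def MJ_def)
next
  case One then show ?case by (simp add: JM_def MJ_def)
next
  case (Meet s t) then show ?case
    by (simp only: eval.simps DC.simps fst_conv snd_conv JM_cprod_app MJ_app) metis
next
  case (Join s t) then show ?case
    by (simp only: eval.simps DC.simps fst_conv snd_conv MJ_cprod_app JM_app) metis
next
  case (Dot s t) then show ?case using wfl_DC[of s] wfl_DC[of t]
    by (simp only: eval.simps DC.simps fst_conv snd_conv JM_cprod_dot[OF assms] MJ_cprod_dot[OF assms]) metis
next
  case (Prime s) then show ?case using wfl_DC[of s]
    by (simp only: eval.simps DC.simps fst_conv snd_conv JM_prime[OF assms] MJ_prime[OF assms]) metis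
qed


definition qry :: "trm list \<Rightarrow> trm list \<Rightarrow> trm list" where
  "qry a c = concat (map (\<lambda>u. map (\<lambda>v. Prime (Dot u (Prime v))) c) a)"

lemma eval_joins: "ts \<noteq> [] \<Longrightarrow> eval \<sigma> (joins ts) = (SUP t\<in>set ts. eval \<sigma> t)"
proof (induction ts rule: joins.induct)
  case 1 then show ?case by simp
next
  case (2 t) then show ?case by simp
next
  case (3 t u ts) then show ?case by (simp add: SUP_insert)
qed

lemma red:
  assumes s: "tws \<sigma>" and a: "a \<noteq> []" and c: "c \<noteq> []"
  shows "(INF u\<in>set a. eval \<sigma> u) \<le> (SUP v\<in>set c. eval \<sigma> v) \<longleftrightarrow> id \<le> eval \<sigma> (joins (qry a c))"
proof -
  let ?f = "INF u\<in>set a. eval \<sigma> u" and ?g = "SUP v\<in>set c. eval \<sigma> v"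
  have f: "TW ?f" by (rule tw_INF_list[OF s a])
  have g: "TW ?g" by (rule tw_SUP_list[OF s c])
  have tX: "TW (eval \<sigma> u \<circ> tw_star (eval \<sigma> v))" for u v
    by (intro tw_comp tw_star tw_eval s)
  have "tw_star ?g = (INF v\<in>set c. tw_star (eval \<sigma> v))"
    using c by (intro star_SUP tw_eval[OF s] ballI) auto
  then have "?f \<circ> tw_star ?g = (INF v\<in>set c. ?f \<circ> tw_star (eval \<sigma> v))"
    using c by (simp only:) (intro comp_INF_left tw_mono f, auto)
  also have "\<dots> = (INF v\<in>set c. INF u\<in>set a. eval \<sigma> u \<circ> tw_star (eval \<sigma> v))"
    by (simp only: comp_INF_right)
  finally have e1: "?f \<circ> tw_star ?g = (INF v\<in>set c. INF u\<in>set a. eval \<sigma> u \<circ> tw_star (eval \<sigma> v))" .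
  have "tw_star (INF v\<in>set c. INF u\<in>set a. eval \<sigma> u \<circ> tw_star (eval \<sigma> v)) =
      (SUP v\<in>set c. tw_star (INF u\<in>set a. eval \<sigma> u \<circ> tw_star (eval \<sigma> v)))"
    using a c by (intro star_INF ballI tw_INF tX) auto
  also have "\<dots> = (SUP v\<in>set c. SUP u\<in>set a. tw_star (eval \<sigma> u \<circ> tw_star (eval \<sigma> v)))"
    using a by (intro SUP_cong[OF refl] star_INF ballI tX) auto
  also have "\<dots> = (SUP u\<in>set a. SUP v\<in>set c. tw_star (eval \<sigma> u \<circ> tw_star (eval \<sigma> v)))"
    by (rule SUP_commute)
  also have "\<dots> = (SUP u\<in>set a. SUP v\<in>set c. eval \<sigma> (Prime (Dot u (Prime v))))" by simp
  also have "\<dots> = (SUP x\<in>set (qry a c). eval \<sigma> x)"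
    unfolding qry_def by (rule SUP_compr[symmetric])
  also have "\<dots> = eval \<sigma> (joins (qry a c))"
  proof -
    obtain u v where "u \<in> set a" "v \<in> set c" using a c by (meson list.set_sel(1))
    then have "qry a c \<noteq> []" unfolding qry_def by auto
    then show ?thesis by (simp add: eval_joins)
  qed
  finally have e2: "tw_star (?f \<circ> tw_star ?g) = eval \<sigma> (joins (qry a c))" using e1 by simp
  show ?thesis using leq_char[OF f g] e2 by simp
qed

lemma W_leq_tws: "W_leq s t \<longleftrightarrow> (\<forall>\<sigma>. tws \<sigma> \<longrightarrow> eval \<sigma> s \<le> eval \<sigma> t)"
  unfolding W_leq_def tws_def le_fun_def by blast

lemma W_leq_iff:
  "W_leq s t \<longleftrightarrow> (\<forall>a\<in>set (fst (DC s)). \<forall>c\<in>set (snd (DC t)). W_leq One (joins (qry a c)))"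
proof -
  have "eval \<sigma> s \<le> eval \<sigma> t \<longleftrightarrow> (\<forall>a\<in>set (fst (DC s)). \<forall>c\<in>set (snd (DC t)). id \<le> eval \<sigma> (joins (qry a c)))"
    if sg: "tws \<sigma>" for \<sigma>
  proof -
    have "eval \<sigma> s \<le> eval \<sigma> t \<longleftrightarrow> JM \<sigma> (fst (DC s)) \<le> MJ \<sigma> (snd (DC t))"
      using conjunct1[OF nf[OF sg, of s]] conjunct2[OF nf[OF sg, of t]] by simp
    also have "\<dots> \<longleftrightarrow> (\<forall>a\<in>set (fst (DC s)). \<forall>c\<in>set (snd (DC t)).
        (INF u\<in>set a. eval \<sigma> u) \<le> (SUP v\<in>set c. eval \<sigma> v))"
      unfolding JM_def MJ_def by (simp add: SUP_le_iff le_INF_iff) blast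
    also have "\<dots> \<longleftrightarrow> (\<forall>a\<in>set (fst (DC s)). \<forall>c\<in>set (snd (DC t)). id \<le> eval \<sigma> (joins (qry a c)))"
    proof -
      have key: "(INF u\<in>set a. eval \<sigma> u) \<le> (SUP v\<in>set c. eval \<sigma> v) \<longleftrightarrow> id \<le> eval \<sigma> (joins (qry a c))"
        if "a \<in> set (fst (DC s))" "c \<in> set (snd (DC t))" for a c
        using red[OF sg] wflD[OF conjunct1[OF wfl_DC[of s]] that(1)] wflD[OF conjunct2[OF wfl_DC[of t]] that(2)]
        by blast
      show ?thesis using key by blast
    qed
    finally show ?thesis .
  qed
  then show ?thesis unfolding W_leq_tws by auto
qed

lemma W_eq_iff: "W_eq s t \<longleftrightarrow> W_leq s t \<and> W_leq t s"
  unfolding W_eq_def W_leq_def by (auto intro: antisym simp: le_fun_def fun_eq_iff)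

lemma W_eq_meet: "W_eq (Meet One J) One \<longleftrightarrow> W_leq One J"
proof -
  have "(inf id (eval \<sigma> J) = id) \<longleftrightarrow> (\<forall>x. eval \<sigma> One x \<le> eval \<sigma> J x)" for \<sigma>
  proof -
    have "(inf id (eval \<sigma> J) = id) \<longleftrightarrow> id \<le> eval \<sigma> J" by (simp add: le_iff_inf)
    then show ?thesis by (simp add: le_fun_def)
  qed
  then show ?thesis unfolding W_eq_def W_leq_def by simp
qed

lemma set_qry: "set (qry a c) = {Prime (Dot u (Prime v)) | u v. u \<in> set a \<and> v \<in> set c}"
  unfolding qry_def by auto

lemma qry_wf: "a \<noteq> [] \<Longrightarrow> c \<noteq> [] \<Longrightarrow> \<forall>u\<in>set a. basic u \<Longrightarrow> \<forall>v\<in>set c. basic v \<Longrightarrow>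
   qry a c \<noteq> [] \<and> (\<forall>x\<in>set (qry a c). basic x)"
proof -
  assume a: "a \<noteq> []" and c: "c \<noteq> []" and ba: "\<forall>u\<in>set a. basic u" and bc: "\<forall>v\<in>set c. basic v"
  obtain u v where "u \<in> set a" "v \<in> set c" using a c by (meson list.set_sel(1))
  then have "Prime (Dot u (Prime v)) \<in> set (qry a c)" unfolding set_qry by blast
  then have "qry a c \<noteq> []" by auto
  moreover have "basic x" if "x \<in> set (qry a c)" for x
  proof -
    obtain u v where "x = Prime (Dot u (Prime v))" "u \<in> set a" "v \<in> set c"
      using \<open>x \<in> set (qry a c)\<close> unfolding set_qry by blast
    then show ?thesis using ba bc by (simp add: basic.intros)
  qed
  ultimately show ?thesis by blast
qed



lemma code_inj: "code s = code t \<Longrightarrow> s = t"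
proof (induction s arbitrary: t)
  case (Var i) then show ?case by (cases t) auto
next
  case (Meet s1 s2) then show ?case by (cases t) auto
next
  case (Join s1 s2) then show ?case by (cases t) auto
next
  case (Dot s1 s2) then show ?case by (cases t) auto
next
  case (Prime s) then show ?case by (cases t) auto
next
  case One then show ?case by (cases t) auto
qed

lemma code_eq_iff [simp]: "code s = code t \<longleftrightarrow> s = t"
  using code_inj by blast

lemma map_code_inj: "map code xs = map code ys \<Longrightarrow> xs = ys"
  by (metis code_inj inj_map_eq_map inj_onI)

definition tg :: "nat \<Rightarrow> nat" where "tg n = fst (prod_decode n)"
definition ar :: "nat \<Rightarrow> nat" where "ar n = snd (prod_decode n)"
definition lf :: "nat \<Rightarrow> nat" where "lf n = fst (prod_decode (ar n))"
definition rg :: "nat \<Rightarrow> nat" where "rg n = snd (prod_decode (ar n))"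
definition Nw :: "nat \<Rightarrow> nat" where "Nw w = fst (prod_decode w)"
definition Hw :: "nat \<Rightarrow> nat" where "Hw w = snd (prod_decode w)"

lemma r_tg [rec1_intros]: "rec1 f \<Longrightarrow> rec1 (\<lambda>x. tg (f x))" unfolding tg_def by (intro rec1_intros)
lemma r_ar [rec1_intros]: "rec1 f \<Longrightarrow> rec1 (\<lambda>x. ar (f x))" unfolding ar_def by (intro rec1_intros)
lemma r_lf [rec1_intros]: "rec1 f \<Longrightarrow> rec1 (\<lambda>x. lf (f x))" unfolding lf_def ar_def by (intro rec1_intros)
lemma r_rg [rec1_intros]: "rec1 f \<Longrightarrow> rec1 (\<lambda>x. rg (f x))" unfolding rg_def ar_def by (intro rec1_intros)
lemma r_Nw [rec1_intros]: "rec1 f \<Longrightarrow> rec1 (\<lambda>x. Nw (f x))" unfolding Nw_def by (intro rec1_intros)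
lemma r_Hw [rec1_intros]: "rec1 f \<Longrightarrow> rec1 (\<lambda>x. Hw (f x))" unfolding Hw_def by (intro rec1_intros)

lemma tg_pe [simp]: "tg (prod_encode (a, b)) = a" by (simp add: tg_def)
lemma ar_pe [simp]: "ar (prod_encode (a, b)) = b" by (simp add: ar_def)
lemma lf_pe [simp]: "lf (prod_encode (a, prod_encode (b, c))) = b" by (simp add: lf_def)
lemma rg_pe [simp]: "rg (prod_encode (a, prod_encode (b, c))) = c" by (simp add: rg_def)
lemma Nw_pe [simp]: "Nw (prod_encode (a, b)) = a" by (simp add: Nw_def)
lemma Hw_pe [simp]: "Hw (prod_encode (a, b)) = b" by (simp add: Hw_def)

lemma pe_Suc_gt: "r < prod_encode (Suc k, r)"
  by (simp add: prod_encode_def)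

lemma pe_lt1: "a < prod_encode (Suc k, prod_encode (a, b))"
  using le_prod_encode_1[of a b] pe_Suc_gt[of "prod_encode (a, b)" k] by linarith

lemma pe_lt2: "b < prod_encode (Suc k, prod_encode (a, b))"
  using le_prod_encode_2[of b a] pe_Suc_gt[of "prod_encode (a, b)" k] by linarith

lemma sub_lt:
  "code s < code (Meet s t)" "code t < code (Meet s t)"
  "code s < code (Join s t)" "code t < code (Join s t)"
  "code s < code (Dot s t)" "code t < code (Dot s t)"
  "code s < code (Prime s)"
  using pe_lt1[of _ 0] pe_lt2[of _ 0] pe_lt1[of _ 1] pe_lt2[of _ 1] pe_lt1[of _ 2] pe_lt2[of _ 2]
    pe_Suc_gt[of _ 3]
  by (simp_all add: numeral_eq_Suc)

lemma cov_unfold: "cov G n = G (prod_encode (n, enc (histL G n)))"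
  by (simp add: cov_def)

lemma decode_cases:
  obtains (t0) i where "n = prod_encode (0, i)"
  | (t1) a b where "n = prod_encode (1, prod_encode (a, b))"
  | (t2) a b where "n = prod_encode (2, prod_encode (a, b))"
  | (t3) a b where "n = prod_encode (3, prod_encode (a, b))"
  | (t4) a where "n = prod_encode (4, a)"
  | (t5) a where "n = prod_encode (5, a)"
  | (t6) k a where "n = prod_encode (k, a)" "k > 5"
proof -
  obtain k r where n: "n = prod_encode (k, r)" by (metis prod_decode_inverse surj_pair)
  obtain a b where r: "r = prod_encode (a, b)" by (metis prod_decode_inverse surj_pair)
  consider "k = 0" | "k = 1" | "k = 2" | "k = 3" | "k = 4" | "k = 5" | "k > 5" by linarith
  then show ?thesis using that n r by metis
qed


definition Gt :: "nat \<Rightarrow> nat" where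
  "Gt w = (if tg (Nw w) = 0 then 0
   else if tg (Nw w) = 1 then cv (Hw w) (Nw w) (lf (Nw w)) + cv (Hw w) (Nw w) (rg (Nw w))
   else if tg (Nw w) = 2 then cv (Hw w) (Nw w) (lf (Nw w)) + cv (Hw w) (Nw w) (rg (Nw w))
   else if tg (Nw w) = 3 then cv (Hw w) (Nw w) (lf (Nw w)) + cv (Hw w) (Nw w) (rg (Nw w))
   else if tg (Nw w) = 4 then cv (Hw w) (Nw w) (ar (Nw w))
   else if tg (Nw w) = 5 then ar (Nw w)
   else 1)"

definition vt :: "nat \<Rightarrow> nat" where "vt = cov Gt"

lemma r_vt: "rec1 vt"
  unfolding vt_def by (rule r_cov) (unfold Gt_def, intro rec1_intros)

definition Gb :: "nat \<Rightarrow> nat" where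
  "Gb w = (if tg (Nw w) = 0 then 0
   else if tg (Nw w) = 3 then cv (Hw w) (Nw w) (lf (Nw w)) + cv (Hw w) (Nw w) (rg (Nw w))
   else if tg (Nw w) = 4 then cv (Hw w) (Nw w) (ar (Nw w))
   else if tg (Nw w) = 5 then ar (Nw w)
   else 1)"

definition vb :: "nat \<Rightarrow> nat" where "vb = cov Gb"

lemma r_vb: "rec1 vb"
  unfolding vb_def by (rule r_cov) (unfold Gb_def, intro rec1_intros)

lemma cov_step: "cov G n = G (prod_encode (n, enc (histL G n)))"
  by (simp add: cov_def)

lemma vt_code: "vt (code t) = 0"
proof (induction t)
  case (Var i) then show ?case unfolding vt_def cov_step by (simp add: Gt_def)
next
  case (Meet s t) then show ?case using sub_lt
    unfolding vt_def cov_step[of Gt "code (Meet s t)"] by (simp add: Gt_def cv_hist del: code.simps) (simp add: cv_hist)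
next
  case (Join s t) then show ?case using sub_lt
    unfolding vt_def cov_step[of Gt "code (Join s t)"] by (simp add: Gt_def cv_hist del: code.simps) (simp add: cv_hist)
next
  case (Dot s t) then show ?case using sub_lt
    unfolding vt_def cov_step[of Gt "code (Dot s t)"] by (simp add: Gt_def cv_hist del: code.simps) (simp add: cv_hist)
next
  case (Prime s) then show ?case using sub_lt
    unfolding vt_def cov_step[of Gt "code (Prime s)"] by (simp add: Gt_def cv_hist del: code.simps) (simp add: cv_hist)
next
  case One then show ?case unfolding vt_def cov_step by (simp add: Gt_def)
qed


lemma vt_inv: "vt n = 0 \<Longrightarrow> \<exists>t. code t = n"
proof (induction n rule: less_induct)
  case (less n)
  let ?h = "enc (histL Gt n)"
  have vn: "Gt (prod_encode (n, ?h)) = 0" using less.prems unfolding vt_def cov_step .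
  show ?case
  proof (cases n rule: decode_cases)
    case (t0 i) then show ?thesis by (metis code.simps(1))
  next
    case (t1 a b)
    have "a < n" "b < n" using t1 pe_lt1[of a 0 b] pe_lt2[of b 0 a] by auto
    then have "vt a = 0" "vt b = 0" using vn t1 by (simp_all add: Gt_def cv_hist vt_def)
    then obtain s t where "code s = a" "code t = b" using less.IH \<open>a < n\<close> \<open>b < n\<close> by blast
    then have "code (Meet s t) = n" using t1 by simp
    then show ?thesis by blast
  next
    case (t2 a b)
    have "a < n" "b < n" using t2 pe_lt1[of a 1 b] pe_lt2[of b 1 a] by (auto simp: numeral_eq_Suc)
    then have "vt a = 0" "vt b = 0" using vn t2 by (simp_all add: Gt_def cv_hist vt_def)
    then obtain s t where "code s = a" "code t = b" using less.IH \<open>a < n\<close> \<open>b < n\<close> by blast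
    then have "code (Join s t) = n" using t2 by simp
    then show ?thesis by blast
  next
    case (t3 a b)
    have "a < n" "b < n" using t3 pe_lt1[of a 2 b] pe_lt2[of b 2 a] by (auto simp: numeral_eq_Suc)
    then have "vt a = 0" "vt b = 0" using vn t3 by (simp_all add: Gt_def cv_hist vt_def)
    then obtain s t where "code s = a" "code t = b" using less.IH \<open>a < n\<close> \<open>b < n\<close> by blast
    then have "code (Dot s t) = n" using t3 by simp
    then show ?thesis by blast
  next
    case (t4 a)
    have "a < n" using t4 pe_Suc_gt[of a 3] by (simp add: numeral_eq_Suc)
    then have "vt a = 0" using vn t4 by (simp add: Gt_def cv_hist vt_def)
    then obtain s where "code s = a" using less.IH \<open>a < n\<close> by blast
    then have "code (Prime s) = n" using t4 by simp
    then show ?thesis by blast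
  next
    case (t5 a)
    then have "a = 0" using vn by (simp add: Gt_def)
    then have "code One = n" using t5 by simp
    then show ?thesis by blast
  next
    case (t6 k a)
    then show ?thesis using vn by (simp add: Gt_def)
  qed
qed

lemma vb_code: "basic t \<Longrightarrow> vb (code t) = 0"
proof (induction rule: basic.induct)
  case (1 i) then show ?case unfolding vb_def cov_step by (simp add: Gb_def)
next
  case (2 s t) then show ?case using sub_lt
    unfolding vb_def cov_step[of Gb "code (Dot s t)"] by (simp add: Gb_def cv_hist del: code.simps) (simp add: cv_hist)
next
  case (3 s) then show ?case using sub_lt
    unfolding vb_def cov_step[of Gb "code (Prime s)"] by (simp add: Gb_def cv_hist del: code.simps) (simp add: cv_hist)
next
  case 4 then show ?case unfolding vb_def cov_step by (simp add: Gb_def)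
qed

lemma vb_inv: "vb n = 0 \<Longrightarrow> \<exists>t. basic t \<and> code t = n"
proof (induction n rule: less_induct)
  case (less n)
  let ?h = "enc (histL Gb n)"
  have vn: "Gb (prod_encode (n, ?h)) = 0" using less.prems unfolding vb_def cov_step .
  show ?case
  proof (cases n rule: decode_cases)
    case (t0 i) then show ?thesis by (metis code.simps(1) basic.intros(1))
  next
    case (t1 a b) then show ?thesis using vn by (simp add: Gb_def)
  next
    case (t2 a b) then show ?thesis using vn by (simp add: Gb_def)
  next
    case (t3 a b)
    have "a < n" "b < n" using t3 pe_lt1[of a 2 b] pe_lt2[of b 2 a] by (auto simp: numeral_eq_Suc)
    then have "vb a = 0" "vb b = 0" using vn t3 by (simp_all add: Gb_def cv_hist vb_def)
    then obtain s t where "basic s" "code s = a" "basic t" "code t = b" using less.IH \<open>a < n\<close> \<open>b < n\<close> by blast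
    then have "code (Dot s t) = n" "basic (Dot s t)" using t3 by (simp_all add: basic.intros)
    then show ?thesis by blast
  next
    case (t4 a)
    have "a < n" using t4 pe_Suc_gt[of a 3] by (simp add: numeral_eq_Suc)
    then have "vb a = 0" using vn t4 by (simp add: Gb_def cv_hist vb_def)
    then obtain s where "basic s" "code s = a" using less.IH \<open>a < n\<close> by blast
    then have "code (Prime s) = n" "basic (Prime s)" using t4 by (simp_all add: basic.intros)
    then show ?thesis by blast
  next
    case (t5 a)
    then have "a = 0" using vn by (simp add: Gb_def)
    then have "code One = n" using t5 by simp
    then show ?thesis using basic.intros(4) by blast
  next
    case (t6 k a)
    then show ?thesis using vn by (simp add: Gb_def)
  qed
qed


section \<open>Normal forms on codes\<close>

definition sgl :: "nat \<Rightarrow> nat" where "sgl x = Suc (prod_encode (x, 0))"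
definition app2 :: "nat \<Rightarrow> nat \<Rightarrow> nat" where "app2 l1 l2 = enc (dec l1 @ dec l2)"
definition capp :: "nat \<Rightarrow> nat \<Rightarrow> nat" where
  "capp l1 l2 = enc (concat (map (\<lambda>a. map (\<lambda>b. enc (dec a @ dec b)) (dec l2)) (dec l1)))"
definition dotc :: "nat \<Rightarrow> nat \<Rightarrow> nat" where
  "dotc l1 l2 = enc (concat (map (\<lambda>u. map (\<lambda>v. prod_encode (3, prod_encode (u, v))) (dec l2)) (dec l1)))"
definition cdot :: "nat \<Rightarrow> nat \<Rightarrow> nat" where
  "cdot l1 l2 = enc (concat (map (\<lambda>a. map (\<lambda>b. dotc a b) (dec l2)) (dec l1)))"
definition mprime :: "nat \<Rightarrow> nat" where
  "mprime l = enc (map (\<lambda>a. enc (map (\<lambda>u. prod_encode (4, u)) (dec a))) (dec l))"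

lemma r_sgl [rec1_intros]: "rec1 f \<Longrightarrow> rec1 (\<lambda>x. sgl (f x))"
  unfolding sgl_def by (intro rec1_intros)

lemma r_app2 [rec1_intros]: "rec1 f \<Longrightarrow> rec1 g \<Longrightarrow> rec1 (\<lambda>x. app2 (f x) (g x))"
  unfolding app2_def by (intro rec1_intros)

lemma r_capp [rec1_intros]: assumes f: "rec1 f" and g: "rec1 g" shows "rec1 (\<lambda>x. capp (f x) (g x))"
proof -
  have F: "rec1 (\<lambda>w. enc (dec (fst (prod_decode (snd (prod_decode w)))) @ dec (snd (prod_decode (snd (prod_decode w))))))"
    by (intro rec1_intros)
  show ?thesis using r_comprehension[OF F f g] by (simp add: capp_def)
qed

lemma r_dotc [rec1_intros]: assumes f: "rec1 f" and g: "rec1 g" shows "rec1 (\<lambda>x. dotc (f x) (g x))"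
proof -
  have F: "rec1 (\<lambda>w. prod_encode (3, prod_encode (fst (prod_decode (snd (prod_decode w))), snd (prod_decode (snd (prod_decode w))))))"
    by (intro rec1_intros)
  show ?thesis using r_comprehension[OF F f g] by (simp add: dotc_def)
qed

lemma r_cdot [rec1_intros]: assumes f: "rec1 f" and g: "rec1 g" shows "rec1 (\<lambda>x. cdot (f x) (g x))"
proof -
  have F: "rec1 (\<lambda>w. dotc (fst (prod_decode (snd (prod_decode w)))) (snd (prod_decode (snd (prod_decode w)))))"
    by (intro rec1_intros)
  show ?thesis using r_comprehension[OF F f g] by (simp add: cdot_def)
qed

lemma r_mprime [rec1_intros]: assumes f: "rec1 f" shows "rec1 (\<lambda>x. mprime (f x))"
proof -
  have F: "rec1 (\<lambda>w. prod_encode (4, snd (prod_decode w)))" by (intro rec1_intros)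
  have inner: "rec1 (\<lambda>x. enc (map (\<lambda>u. prod_encode (4, u)) (dec x)))"
    using r_map[OF F r_id] by simp
  have F2: "rec1 (\<lambda>w. enc (map (\<lambda>u. prod_encode (4, u)) (dec (snd (prod_decode w)))))"
    using r_comp[OF inner r_snd1] by simp
  show ?thesis using r_map[OF F2 f] by (simp add: mprime_def)
qed

definition encL :: "trm list \<Rightarrow> nat" where "encL a = enc (map code a)"
definition encLL :: "trm list list \<Rightarrow> nat" where "encLL L = enc (map encL L)"

lemma sgl_code: "sgl (sgl (code t)) = encLL [[t]]"
  by (simp add: sgl_def encLL_def encL_def)

lemma app2_enc: "app2 (encLL A) (encLL B) = encLL (A @ B)"
  by (simp add: app2_def encLL_def)

lemma capp_enc: "capp (encLL A) (encLL B) = encLL (cprod (@) A B)"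
  by (simp add: capp_def encLL_def encL_def cprod_def map_concat comp_def)

lemma dotc_enc: "dotc (encL a) (encL b) = encL (dotl a b)"
  by (simp add: dotc_def encL_def dotl_def map_concat comp_def)

lemma cdot_enc: "cdot (encLL A) (encLL B) = encLL (cprod dotl A B)"
  by (simp add: cdot_def encLL_def cprod_def map_concat comp_def dotc_enc)

lemma mprime_enc: "mprime (encLL C) = encLL (map (map Prime) C)"
  by (simp add: mprime_def encLL_def encL_def comp_def)

definition Xw :: "nat \<Rightarrow> nat" where "Xw w = cv (Hw w) (Nw w) (lf (Nw w))"
definition Yw :: "nat \<Rightarrow> nat" where "Yw w = cv (Hw w) (Nw w) (rg (Nw w))"
definition Zw :: "nat \<Rightarrow> nat" where "Zw w = cv (Hw w) (Nw w) (ar (Nw w))"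

lemma r_Xw [rec1_intros]: "rec1 f \<Longrightarrow> rec1 (\<lambda>x. Xw (f x))" unfolding Xw_def by (intro rec1_intros)
lemma r_Yw [rec1_intros]: "rec1 f \<Longrightarrow> rec1 (\<lambda>x. Yw (f x))" unfolding Yw_def by (intro rec1_intros)
lemma r_Zw [rec1_intros]: "rec1 f \<Longrightarrow> rec1 (\<lambda>x. Zw (f x))" unfolding Zw_def by (intro rec1_intros)

definition Gdc :: "nat \<Rightarrow> nat" where
  "Gdc w = (if tg (Nw w) = 1 then prod_encode (capp (fst (prod_decode (Xw w))) (fst (prod_decode (Yw w))),
                                              app2 (snd (prod_decode (Xw w))) (snd (prod_decode (Yw w))))
   else if tg (Nw w) = 2 then prod_encode (app2 (fst (prod_decode (Xw w))) (fst (prod_decode (Yw w))),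
                                              capp (snd (prod_decode (Xw w))) (snd (prod_decode (Yw w))))
   else if tg (Nw w) = 3 then prod_encode (cdot (fst (prod_decode (Xw w))) (fst (prod_decode (Yw w))),
                                              cdot (snd (prod_decode (Xw w))) (snd (prod_decode (Yw w))))
   else if tg (Nw w) = 4 then prod_encode (mprime (snd (prod_decode (Zw w))), mprime (fst (prod_decode (Zw w))))
   else prod_encode (sgl (sgl (Nw w)), sgl (sgl (Nw w))))"

definition dc :: "nat \<Rightarrow> nat" where "dc = cov Gdc"

lemma r_dc: "rec1 dc"
  unfolding dc_def by (rule r_cov) (unfold Gdc_def, intro rec1_intros)

lemma dc_code: "dc (code t) = prod_encode (encLL (fst (DC t)), encLL (snd (DC t)))"
proof (induction t)
  case (Var i) then show ?case unfolding dc_def cov_step by (simp add: Gdc_def sgl_def encLL_def encL_def)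
next
  case One then show ?case unfolding dc_def cov_step by (simp add: Gdc_def sgl_def encLL_def encL_def)
next
  case (Meet s t) then show ?case using sub_lt
    unfolding dc_def cov_step[of Gdc "code (Meet s t)"]
    by (simp add: Gdc_def Xw_def Yw_def cv_hist del: code.simps)
       (simp add: cv_hist capp_enc app2_enc)
next
  case (Join s t) then show ?case using sub_lt
    unfolding dc_def cov_step[of Gdc "code (Join s t)"]
    by (simp add: Gdc_def Xw_def Yw_def cv_hist del: code.simps)
       (simp add: cv_hist capp_enc app2_enc)
next
  case (Dot s t) then show ?case using sub_lt
    unfolding dc_def cov_step[of Gdc "code (Dot s t)"]
    by (simp add: Gdc_def Xw_def Yw_def cv_hist del: code.simps)
       (simp add: cv_hist cdot_enc)
next
  case (Prime s) then show ?case using sub_lt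
    unfolding dc_def cov_step[of Gdc "code (Prime s)"]
    by (simp add: Gdc_def Zw_def cv_hist del: code.simps)
       (simp add: cv_hist mprime_enc)
qed


section \<open>Deciders\<close>

lemma r_vt' [rec1_intros]: "rec1 f \<Longrightarrow> rec1 (\<lambda>x. vt (f x))" by (rule r_comp[OF r_vt])
lemma r_vb' [rec1_intros]: "rec1 f \<Longrightarrow> rec1 (\<lambda>x. vb (f x))" by (rule r_comp[OF r_vb])
lemma r_dc' [rec1_intros]: "rec1 f \<Longrightarrow> rec1 (\<lambda>x. dc (f x))" by (rule r_comp[OF r_dc])

lemma decidable_iff: "decidable_set A \<longleftrightarrow> (\<exists>g. rec1 g \<and> (\<forall>x. x \<in> A \<longleftrightarrow> g x = 0))"
proof
  assume "decidable_set A"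
  then obtain f where f: "total_rec 1 f" "\<forall>x. x \<in> A \<longleftrightarrow> f [x] = 0" unfolding decidable_set_def by blast
  have "computable 1 f" using f(1) by (rule tr_computable)
  then have "rec1 (\<lambda>x. f [x])" unfolding rec1_def
    by (rule computable_cong) (auto simp: length_Suc_conv)
  then show "\<exists>g. rec1 g \<and> (\<forall>x. x \<in> A \<longleftrightarrow> g x = 0)" using f(2) by blast
next
  assume "\<exists>g. rec1 g \<and> (\<forall>x. x \<in> A \<longleftrightarrow> g x = 0)"
  then obtain g where g: "rec1 g" "\<forall>x. x \<in> A \<longleftrightarrow> g x = 0" by blast
  then obtain f where f: "total_rec 1 f" "\<forall>xs. length xs = 1 \<longrightarrow> f xs = g (hd xs)"
    unfolding rec1_def computable_def by blast
  have "\<forall>x. x \<in> A \<longleftrightarrow> f [x] = 0" using f(2) g(2) by simp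
  then show "decidable_set A" unfolding decidable_set_def using f(1) by blast
qed

lemma bjc_enc: "encL ts \<in> basic_join_codes \<longleftrightarrow> ts \<noteq> [] \<and> (\<forall>t\<in>set ts. basic t) \<and> W_leq One (joins ts)"
proof
  assume "encL ts \<in> basic_join_codes"
  then obtain ts' where "encL ts = enc (map code ts')" "ts' \<noteq> []" "\<forall>t\<in>set ts'. basic t" "W_leq One (joins ts')"
    unfolding basic_join_codes_def by blast
  moreover then have "ts' = ts" unfolding encL_def by (metis list_encode_eq map_code_inj)
  ultimately show "ts \<noteq> [] \<and> (\<forall>t\<in>set ts. basic t) \<and> W_leq One (joins ts)" by blast
next
  assume "ts \<noteq> [] \<and> (\<forall>t\<in>set ts. basic t) \<and> W_leq One (joins ts)"
  then show "encL ts \<in> basic_join_codes" unfolding basic_join_codes_def encL_def by blast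
qed

lemma eqc_code: "prod_encode (code s, code t) \<in> equational_theory_codes \<longleftrightarrow> W_eq s t"
  unfolding equational_theory_codes_def by auto

definition qc :: "nat \<Rightarrow> nat \<Rightarrow> nat" where
  "qc a c = enc (concat (map (\<lambda>u. map (\<lambda>v. prod_encode (4, prod_encode (3, prod_encode (u, prod_encode (4, v))))) (dec c)) (dec a)))"

lemma qc_enc: "qc (encL a) (encL c) = encL (qry a c)"
  by (simp add: qc_def encL_def qry_def map_concat comp_def)

lemma r_qc [rec1_intros]: assumes f: "rec1 f" and g: "rec1 g" shows "rec1 (\<lambda>x. qc (f x) (g x))"
proof -
  have F: "rec1 (\<lambda>w. prod_encode (4, prod_encode (3, prod_encode (fst (prod_decode (snd (prod_decode w))),
        prod_encode (4, snd (prod_decode (snd (prod_decode w))))))))"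
    by (intro rec1_intros)
  show ?thesis using r_comprehension[OF F f g] by (simp add: qc_def)
qed

definition Qall :: "nat \<Rightarrow> nat \<Rightarrow> nat" where
  "Qall x y = enc (concat (map (\<lambda>a. map (\<lambda>c. qc a c) (dec (snd (prod_decode (dc y))))) (dec (fst (prod_decode (dc x))))))"

lemma r_Qall [rec1_intros]: assumes f: "rec1 f" and g: "rec1 g" shows "rec1 (\<lambda>x. Qall (f x) (g x))"
proof -
  have F: "rec1 (\<lambda>w. qc (fst (prod_decode (snd (prod_decode w)))) (snd (prod_decode (snd (prod_decode w)))))"
    by (intro rec1_intros)
  have L1: "rec1 (\<lambda>x. fst (prod_decode (dc (f x))))" by (intro rec1_intros f)
  have L2: "rec1 (\<lambda>x. snd (prod_decode (dc (g x))))" by (intro rec1_intros g)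
  show ?thesis using r_comprehension[OF F L1 L2] by (simp add: Qall_def)
qed

lemma Qall_code: "dec (Qall (code s) (code t)) =
   concat (map (\<lambda>a. map (\<lambda>c. encL (qry a c)) (snd (DC t))) (fst (DC s)))"
  by (simp add: Qall_def dc_code encLL_def map_concat comp_def qc_enc)

lemma Qall_sum:
  fixes d :: "nat \<Rightarrow> nat"
  assumes d: "\<forall>q. q \<in> basic_join_codes \<longleftrightarrow> d q = 0"
  shows "sum_list (map d (dec (Qall (code s) (code t)))) = 0 \<longleftrightarrow> W_leq s t"
proof -
  have "sum_list (map d (dec (Qall (code s) (code t)))) = 0 \<longleftrightarrow>
      (\<forall>a\<in>set (fst (DC s)). \<forall>c\<in>set (snd (DC t)). d (encL (qry a c)) = 0)"
    unfolding Qall_code by (simp add: sum_list_eq_0_iff)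
  also have "\<dots> \<longleftrightarrow> (\<forall>a\<in>set (fst (DC s)). \<forall>c\<in>set (snd (DC t)). W_leq One (joins (qry a c)))"
  proof -
    have "d (encL (qry a c)) = 0 \<longleftrightarrow> W_leq One (joins (qry a c))"
      if "a \<in> set (fst (DC s))" "c \<in> set (snd (DC t))" for a c
    proof -
      have wa: "a \<noteq> []" "\<forall>u\<in>set a. basic u" using that(1) wfl_DC[of s] unfolding wfl_def by auto
      have wc: "c \<noteq> []" "\<forall>u\<in>set c. basic u" using that(2) wfl_DC[of t] unfolding wfl_def by auto
      show ?thesis using d bjc_enc[of "qry a c"] qry_wf[OF wa(1) wc(1) wa(2) wc(2)] by blast
    qed
    then show ?thesis by blast
  qed
  also have "\<dots> \<longleftrightarrow> W_leq s t" by (rule W_leq_iff[symmetric])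
  finally show ?thesis .
qed

definition Edec :: "(nat \<Rightarrow> nat) \<Rightarrow> nat \<Rightarrow> nat" where
  "Edec d z = (if vt (fst (prod_decode z)) + vt (snd (prod_decode z)) = 0
     then sum_list (map d (dec (Qall (fst (prod_decode z)) (snd (prod_decode z))))) +
          sum_list (map d (dec (Qall (snd (prod_decode z)) (fst (prod_decode z)))))
     else 1)"

lemma r_Edec: assumes d: "rec1 d" shows "rec1 (Edec d)"
proof -
  have F: "rec1 (\<lambda>w. d (snd (prod_decode w)))" by (intro r_comp[OF d] rec1_intros)
  have S1: "rec1 (\<lambda>z. sum_list (map d (dec (Qall (fst (prod_decode z)) (snd (prod_decode z))))))"
    using r_sumlist[OF F r_Qall[OF r_fst1 r_snd1]] by simp
  have S2: "rec1 (\<lambda>z. sum_list (map d (dec (Qall (snd (prod_decode z)) (fst (prod_decode z))))))"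
    using r_sumlist[OF F r_Qall[OF r_snd1 r_fst1]] by simp
  have "rec1 (\<lambda>z. if vt (fst (prod_decode z)) + vt (snd (prod_decode z)) = 0
     then sum_list (map d (dec (Qall (fst (prod_decode z)) (snd (prod_decode z))))) +
          sum_list (map d (dec (Qall (snd (prod_decode z)) (fst (prod_decode z)))))
     else 1)"
    by (intro rec1_intros S1 S2)
  then show ?thesis unfolding Edec_def[abs_def] .
qed

lemma Edec_correct:
  fixes d :: "nat \<Rightarrow> nat"
  assumes d: "\<forall>q. q \<in> basic_join_codes \<longleftrightarrow> d q = 0"
  shows "z \<in> equational_theory_codes \<longleftrightarrow> Edec d z = 0"
proof (cases "vt (fst (prod_decode z)) + vt (snd (prod_decode z)) = 0")
  case True
  then obtain s t where st: "code s = fst (prod_decode z)" "code t = snd (prod_decode z)"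
    using vt_inv by (metis add_is_0)
  then have z: "z = prod_encode (code s, code t)" by (metis prod.collapse prod_decode_inverse)
  have "Edec d z = 0 \<longleftrightarrow> W_leq s t \<and> W_leq t s"
    using True Qall_sum[OF d, of s t] Qall_sum[OF d, of t s] st unfolding Edec_def by simp
  also have "\<dots> \<longleftrightarrow> z \<in> equational_theory_codes" using z eqc_code W_eq_iff by simp
  finally show ?thesis by simp
next
  case False
  have "z \<notin> equational_theory_codes"
  proof
    assume "z \<in> equational_theory_codes"
    then obtain s t where "z = prod_encode (code s, code t)" unfolding equational_theory_codes_def by blast
    then show False using False vt_code by simp
  qed
  moreover have "Edec d z = 1" using False unfolding Edec_def by (simp only: if_False)
  ultimately show ?thesis by simp
qed


fun jl :: "nat list \<Rightarrow> nat" where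
  "jl [] = 0"
| "jl [c] = c"
| "jl (c # d # cs) = prod_encode (2, prod_encode (c, jl (d # cs)))"

lemma jl_code: "ts \<noteq> [] \<Longrightarrow> jl (map code ts) = code (joins ts)"
  by (induction ts rule: joins.induct) auto

lemma jl_snoc: "jl (xs @ [y]) = foldl (\<lambda>acc c. prod_encode (2, prod_encode (c, acc))) y (rev xs)"
proof (induction xs)
  case Nil then show ?case by simp
next
  case (Cons x xs)
  then show ?case by (cases xs) auto
qed

definition jcode :: "nat \<Rightarrow> nat" where
  "jcode x = foldl (\<lambda>acc c. prod_encode (2, prod_encode (c, acc))) (hd_e (enc (rev (dec x)))) (dec (tl_e (enc (rev (dec x)))))"

lemma r_jcode: "rec1 jcode"
proof -
  have b: "rec1 (\<lambda>w. prod_encode (2, prod_encode (fst (prod_decode (snd (prod_decode w))), snd (prod_decode (snd (prod_decode w))))))"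
    by (intro rec1_intros)
  have a: "rec1 (\<lambda>x. hd_e (enc (rev (dec x))))" by (intro rec1_intros)
  have L: "rec1 (\<lambda>x. tl_e (enc (rev (dec x))))" by (intro rec1_intros)
  show ?thesis using r_foldl[OF b a L] by (simp add: jcode_def[abs_def])
qed

lemma jcode_enc: "ts \<noteq> [] \<Longrightarrow> jcode (encL ts) = code (joins ts)"
proof -
  assume ts: "ts \<noteq> []"
  let ?l = "map code ts"
  have l: "?l = butlast ?l @ [last ?l]" using ts by simp
  have r: "rev ?l = last ?l # rev (butlast ?l)" by (subst l) simp
  have "jcode (encL ts) = foldl (\<lambda>acc c. prod_encode (2, prod_encode (c, acc))) (last ?l) (rev (butlast ?l))"
    unfolding jcode_def encL_def by (simp only: list_encode_inverse r list_encode.simps hd_e_Suc tl_e_Suc)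
  also have "\<dots> = jl ?l" using jl_snoc[of "butlast ?l" "last ?l"] l by simp
  also have "\<dots> = code (joins ts)" by (rule jl_code[OF ts])
  finally show ?thesis .
qed

definition qe :: "nat \<Rightarrow> nat" where
  "qe x = prod_encode (prod_encode (1, prod_encode (prod_encode (5, 0), jcode x)), prod_encode (5, 0))"

definition Bdec :: "(nat \<Rightarrow> nat) \<Rightarrow> nat \<Rightarrow> nat" where
  "Bdec e x = (if x = 0 then 1 else if sum_list (map vb (dec x)) = 0 then e (qe x) else 1)"

lemma r_Bdec: assumes e: "rec1 e" shows "rec1 (Bdec e)"
proof -
  have F: "rec1 (\<lambda>w. vb (snd (prod_decode w)))" by (intro rec1_intros)
  have S: "rec1 (\<lambda>x. sum_list (map vb (dec x)))" using r_sumlist[OF F r_id] by simp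
  have Q: "rec1 (\<lambda>x. e (qe x))" unfolding qe_def by (intro r_comp[OF e] rec1_intros r_comp[OF r_jcode])
  have "rec1 (\<lambda>x. if x = 0 then 1 else if sum_list (map vb (dec x)) = 0 then e (qe x) else 1)"
    by (intro rec1_intros S Q)
  then show ?thesis unfolding Bdec_def[abs_def] .
qed

lemma Bdec_correct:
  fixes e :: "nat \<Rightarrow> nat"
  assumes e: "\<forall>q. q \<in> equational_theory_codes \<longleftrightarrow> e q = 0"
  shows "x \<in> basic_join_codes \<longleftrightarrow> Bdec e x = 0"
proof -
  have notin: "x \<notin> basic_join_codes" if "x = 0 \<or> sum_list (map vb (dec x)) \<noteq> 0"
  proof
    assume "x \<in> basic_join_codes"
    then obtain ts where ts: "x = enc (map code ts)" "ts \<noteq> []" "\<forall>t\<in>set ts. basic t"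
      unfolding basic_join_codes_def by blast
    then have "x \<noteq> 0" by simp
    moreover have "sum_list (map vb (dec x)) = 0" using ts vb_code by (simp add: sum_list_eq_0_iff)
    ultimately show False using that by blast
  qed
  show ?thesis
  proof (cases "x = 0 \<or> sum_list (map vb (dec x)) \<noteq> 0")
    case True
    then have "Bdec e x = 1" unfolding Bdec_def by auto
    then show ?thesis using notin[OF True] by simp
  next
    case False
    then have x0: "x \<noteq> 0" and sv: "\<forall>c\<in>set (dec x). vb c = 0" by (auto simp: sum_list_eq_0_iff)
    define ts where "ts = map (\<lambda>c. SOME t. basic t \<and> code t = c) (dec x)"
    have "\<forall>c\<in>set (dec x). basic (SOME t. basic t \<and> code t = c) \<and> code (SOME t. basic t \<and> code t = c) = c"
      using sv vb_inv by (metis (mono_tags, lifting) someI_ex)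
    then have mc: "map code ts = dec x" and bt: "\<forall>t\<in>set ts. basic t"
      unfolding ts_def by (auto simp: map_idI comp_def intro: map_idI)
    have xe: "x = encL ts" unfolding encL_def mc by simp
    have tsne: "ts \<noteq> []" using x0 xe unfolding encL_def by auto
    have "Bdec e x = e (qe x)" using False unfolding Bdec_def by auto
    also have "qe x = prod_encode (code (Meet One (joins ts)), code One)"
      unfolding qe_def xe using jcode_enc[OF tsne] by simp
    finally have "Bdec e x = e (prod_encode (code (Meet One (joins ts)), code One))" .
    then have "Bdec e x = 0 \<longleftrightarrow> prod_encode (code (Meet One (joins ts)), code One) \<in> equational_theory_codes"
      using e by (simp only:)
    also have "\<dots> \<longleftrightarrow> W_eq (Meet One (joins ts)) One" by (rule eqc_code)
    also have "\<dots> \<longleftrightarrow> W_leq One (joins ts)" by (rule W_eq_meet)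
    also have "\<dots> \<longleftrightarrow> x \<in> basic_join_codes" using bjc_enc[of ts] xe tsne bt by simp
    finally show ?thesis by simp
  qed
qed

theorem proposition3p1:
  shows "decidable_set equational_theory_codes \<longleftrightarrow> decidable_set basic_join_codes"
proof
  assume "decidable_set equational_theory_codes"
  then obtain e where e: "rec1 e" "\<forall>q. q \<in> equational_theory_codes \<longleftrightarrow> e q = 0"
    unfolding decidable_iff by blast
  have "rec1 (Bdec e)" by (rule r_Bdec[OF e(1)])
  moreover have "\<forall>x. x \<in> basic_join_codes \<longleftrightarrow> Bdec e x = 0" using Bdec_correct[OF e(2)] by blast
  ultimately show "decidable_set basic_join_codes" unfolding decidable_iff by blast
next
  assume "decidable_set basic_join_codes"
  then obtain d where d: "rec1 d" "\<forall>q. q \<in> basic_join_codes \<longleftrightarrow> d q = 0"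
    unfolding decidable_iff by blast
  have "rec1 (Edec d)" by (rule r_Edec[OF d(1)])
  moreover have "\<forall>x. x \<in> equational_theory_codes \<longleftrightarrow> Edec d x = 0" using Edec_correct[OF d(2)] by blast
  ultimately show "decidable_set equational_theory_codes" unfolding decidable_iff by blast
qed


end
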